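(* Let $\lambda>1$ and $n\ge1$. Then $\Theta_\lambda^*$ maps $V_{n,\lambda-1}$ into $V_{n-1,\lambda+1}$ and maps $V_{n,\lambda-1}^\perp$ into $V_{n-1,\lambda+1}^\perp$, where $\Theta_\lambda^*:\mathcal H^{(\lambda-1)}\otimes H^2\to\mathcal H^{(\lambda+1)}\otimes H^2$ is given by $$(\Theta_\lambda^*f)(z,w)=\frac1{\sqrt{\lambda(\lambda-1)}}\frac{\partial f}{\partial w}(z,w)-\sqrt{\frac{\lambda-1}{\lambda}}\,\frac{f(z,w)-f(w,w)}{z-w},\qquad z,w\in\mathbb D.$$
   Context: For $\lambda>0$, $\mathcal H^{(\lambda)}$ is the Hilbert space of holomorphic functions on $\mathbb D$ with reproducing kernel $(1-z\bar w)^{-\lambda}$, and $H^2$ the Hardy space. $\mathcal H^{(\lambda)}\otimes H^2$ is identified with a Hilbert space of holomorphic functions on $\mathbb D^2$ via $f\otimes g\mapsto((z,w)\mapsto g(z)f(w))$. Let $\triangle=\{(z,z):z\in\mathbb D\}$. For $k\ge0$, $V_{k,\lambda}$ is the orthogonal complement in $\mathcal H^{(\lambda)}\otimes H^2$ of the set of all its elements vanishing to order $\ge k$ on $\triangle$ (all partial derivatives of order $<k$ vanish on $\triangle$); $V_{k,\lambda}^\perp$ is its orthogonal complement. The displayed operator is the adjoint of the characteristic operator of multiplication by $z$ on $\mathcal H^{(\lambda)}$. *)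

theory Defs
  imports "HOL-Analysis.Analysis"
begin

text \<open>Functions on the bidisc are modelled as maps complex \<times> complex \<Rightarrow> complex;
  only their values on the open bidisc matter.  The first coordinate z is the
  Hardy-space variable, the second coordinate w is the H^(lambda) variable.\<close>

text \<open>Norm square of the monomial w^n in H^(lambda) (kernel (1 - z conj w) powr -lambda):
  n! / (lambda)_n.\<close>
definition wt :: "real \<Rightarrow> nat \<Rightarrow> real" where
  "wt lam n = fact n / pochhammer lam n"

definition has_expansion :: "(nat \<times> nat \<Rightarrow> complex) \<Rightarrow> (complex \<times> complex \<Rightarrow> complex) \<Rightarrow> bool" where
  "has_expansion a f \<longleftrightarrow>
     (\<forall>z w. norm z < 1 \<and> norm w < 1 \<longrightarrow>
        ((\<lambda>(m,n). a (m,n) * z ^ m * w ^ n) has_sum f (z,w)) UNIV)"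

text \<open>The Hilbert space H^(lambda) tensor H^2, as a set of functions on the bidisc.\<close>
definition Hsp :: "real \<Rightarrow> (complex \<times> complex \<Rightarrow> complex) set" where
  "Hsp lam = {f. \<exists>a. has_expansion a f \<and>
                   (\<lambda>(m,n). (norm (a (m,n)))\<^sup>2 * wt lam n) summable_on UNIV}"

definition coeffs :: "(complex \<times> complex \<Rightarrow> complex) \<Rightarrow> nat \<times> nat \<Rightarrow> complex" where
  "coeffs f = (SOME a. has_expansion a f)"

definition inner_H :: "real \<Rightarrow> (complex \<times> complex \<Rightarrow> complex) \<Rightarrow> (complex \<times> complex \<Rightarrow> complex) \<Rightarrow> complex" where
  "inner_H lam f g = infsum (\<lambda>(m,n). coeffs f (m,n) * cnj (coeffs g (m,n)) * of_real (wt lam n)) UNIV"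

definition dz :: "(complex \<times> complex \<Rightarrow> complex) \<Rightarrow> complex \<times> complex \<Rightarrow> complex" where
  "dz f = (\<lambda>(z,w). deriv (\<lambda>x. f (x,w)) z)"

definition dw :: "(complex \<times> complex \<Rightarrow> complex) \<Rightarrow> complex \<times> complex \<Rightarrow> complex" where
  "dw f = (\<lambda>(z,w). deriv (\<lambda>y. f (z,y)) w)"

definition vanishes_to_order :: "nat \<Rightarrow> (complex \<times> complex \<Rightarrow> complex) \<Rightarrow> bool" where
  "vanishes_to_order k f \<longleftrightarrow>
     (\<forall>i j. i + j < k \<longrightarrow> (\<forall>z. norm z < 1 \<longrightarrow> (dz ^^ i) ((dw ^^ j) f) (z,z) = 0))"

definition Vsp :: "nat \<Rightarrow> real \<Rightarrow> (complex \<times> complex \<Rightarrow> complex) set" where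
  "Vsp k lam = {g \<in> Hsp lam. \<forall>f \<in> Hsp lam. vanishes_to_order k f \<longrightarrow> inner_H lam g f = 0}"

definition Vperp :: "nat \<Rightarrow> real \<Rightarrow> (complex \<times> complex \<Rightarrow> complex) set" where
  "Vperp k lam = {h \<in> Hsp lam. \<forall>g \<in> Vsp k lam. inner_H lam h g = 0}"

text \<open>The operator Theta_lambda^*; on the diagonal the difference quotient is
  replaced by its limit, the z-derivative.\<close>
definition Theta :: "real \<Rightarrow> (complex \<times> complex \<Rightarrow> complex) \<Rightarrow> complex \<times> complex \<Rightarrow> complex" where
  "Theta lam f = (\<lambda>(z,w).
     of_real (1 / sqrt (lam * (lam - 1))) * dw f (z,w)
     - of_real (sqrt ((lam - 1) / lam)) *
         (if z = w then dz f (w,w) else (f (z,w) - f (w,w)) / (z - w)))"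

end

theory Submission
  imports Defs "HOL-Computational_Algebra.Polynomial"
begin

definition al :: "real \<Rightarrow> real" where "al L = 1 / sqrt (L*(L-1))"
definition be :: "real \<Rightarrow> real" where "be L = sqrt ((L-1)/L)"
definition tt :: "real \<Rightarrow> nat \<Rightarrow> real" where "tt L N = fact N / pochhammer L N"
definition bseq :: "real \<Rightarrow> (nat \<Rightarrow> complex) \<Rightarrow> nat \<Rightarrow> complex" where
  "bseq L a j = of_real (al L) * of_nat (Suc j) * a (Suc j) - of_real (be L) * (\<Sum>k\<le>j. a k)"

lemma albe_facts:
  assumes "L > 1"
  shows "al L * be L = 1 / L" "(al L)^2 = 1/(L*(L-1))" "(be L)^2 = (L-1)/L"
proof -
  have p: "L*(L-1) > 0" "(L-1)/L > 0" using assms by auto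
  show "(al L)^2 = 1/(L*(L-1))" using p by (simp add: al_def power_divide)
  show "(be L)^2 = (L-1)/L" using p by (simp add: be_def)
  have sq: "(al L * be L)^2 = (1/L)^2"
  proof -
    have "(al L * be L)^2 = (1/(L*(L-1))) * ((L-1)/L)"
      using p by (simp add: al_def be_def power_mult_distrib power_divide)
    also have "\<dots> = (1/L)^2" using assms by (simp add: field_simps power2_eq_square)
    finally show ?thesis .
  qed
  have "al L * be L \<ge> 0" using p by (simp add: al_def be_def)
  then show "al L * be L = 1 / L" using sq assms
    by (metis less_imp_le power2_eq_imp_eq zero_le_divide_1_iff zero_less_one order_less_trans)
qed

lemma real_ids:
  assumes "L > 1"
  shows "(be L)^2 * wt (L+1) N = tt L N - tt L (Suc N)"
        "(al L)^2 * (of_nat (Suc N))^2 * wt (L+1) N + tt L (Suc N) = wt (L-1) (Suc N)"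
        "al L * be L * of_nat (Suc N) * wt (L+1) N = tt L (Suc N)"
proof -
  define P where "P = pochhammer L N"
  define Q where "Q = pochhammer (L+1) N"
  define f where "f = (fact N :: real)"
  have Q: "Q > 0" unfolding Q_def using assms by (intro pochhammer_pos) auto
  have e1: "pochhammer L (Suc N) = P * (L + of_nat N)" unfolding P_def by (simp add: pochhammer_rec')
  have e2: "pochhammer L (Suc N) = L * Q" unfolding Q_def by (simp add: pochhammer_rec)
  have e3: "pochhammer (L-1) (Suc N) = (L-1) * P" unfolding P_def by (simp add: pochhammer_rec)
  have fS: "fact (Suc N) = (of_nat N + 1) * f" by (simp add: f_def)
  have LN: "L + of_nat N > 0" using assms by simp
  have PL: "P = L * Q / (L + of_nat N)" using e1 e2 LN by (simp add: field_simps)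
  note ab = albe_facts[OF assms]
  have w1: "wt (L+1) N = f / Q" by (simp add: wt_def f_def Q_def)
  have t0: "tt L N = f * (L + of_nat N) / (L * Q)" using LN assms Q by (simp add: tt_def PL f_def P_def[symmetric])
  have t1: "tt L (Suc N) = (of_nat N + 1) * f / (L * Q)" by (simp add: tt_def e2 fS del: fact_Suc)
  have w2: "wt (L-1) (Suc N) = (of_nat N + 1) * f * (L + of_nat N) / ((L-1) * L * Q)"
    using LN assms Q by (simp add: wt_def e3 fS PL f_def del: fact_Suc)
  show "(be L)^2 * wt (L+1) N = tt L N - tt L (Suc N)"
    unfolding w1 t0 t1 ab using assms Q by (simp add: field_simps)
  show "(al L)^2 * (of_nat (Suc N))^2 * wt (L+1) N + tt L (Suc N) = wt (L-1) (Suc N)"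
    unfolding w1 w2 t1 ab using assms Q by (simp add: field_simps power2_eq_square)
  show "al L * be L * of_nat (Suc N) * wt (L+1) N = tt L (Suc N)"
    unfolding w1 t1 ab using assms Q by (simp add: field_simps)
qed

lemma cplx_step:
  fixes x x' A A' :: complex and a b n wp t0 t1 wm :: real
  assumes "b^2 * wp = t0 - t1" "a^2 * n^2 * wp + t1 = wm" "a * b * n * wp = t1"
  shows "(of_real a * of_real n * x - of_real b * A) * cnj (of_real a * of_real n * x' - of_real b * A') * of_real wp
     + of_real t1 * (A + x) * cnj (A' + x') - of_real t0 * A * cnj A' = x * cnj x' * of_real wm"
proof -
  have t0: "t0 = b^2*wp + t1" using assms(1) by simp
  show ?thesis unfolding t0 assms(2)[symmetric] assms(3)[symmetric]
    by (simp add: algebra_simps power2_eq_square)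
qed

lemma deg_identity:
  assumes "L > 1"
  shows "(\<Sum>j<N. bseq L a j * cnj (bseq L a' j) * of_real (wt (L+1) j))
          + of_real (tt L N) * (\<Sum>k\<le>N. a k) * cnj (\<Sum>k\<le>N. a' k)
       = (\<Sum>k\<le>N. a k * cnj (a' k) * of_real (wt (L-1) k))"
proof (induction N)
  case 0
  then show ?case by (simp add: tt_def wt_def)
next
  case (Suc N)
  have st: "bseq L a N * cnj (bseq L a' N) * of_real (wt (L+1) N)
     + of_real (tt L (Suc N)) * ((\<Sum>k\<le>N. a k) + a (Suc N)) * cnj ((\<Sum>k\<le>N. a' k) + a' (Suc N))
     - of_real (tt L N) * (\<Sum>k\<le>N. a k) * cnj (\<Sum>k\<le>N. a' k)
     = a (Suc N) * cnj (a' (Suc N)) * of_real (wt (L-1) (Suc N))"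
    unfolding bseq_def
    using cplx_step[OF real_ids[OF assms, of N], of "a (Suc N)" "\<Sum>k\<le>N. a k" "a' (Suc N)" "\<Sum>k\<le>N. a' k"]
    by (simp add: mult.assoc)
  have gen: "\<And>A B C D E (F::complex). A + C = D \<Longrightarrow> B + E - C = F \<Longrightarrow> A + B + E = D + F"
    by (simp add: algebra_simps)
  show ?case using Suc.IH st
    unfolding sum.lessThan_Suc sum.atMost_Suc complex_cnj_add
    by (rule gen)
qed

definition sl :: "(nat \<times> nat \<Rightarrow> complex) \<Rightarrow> nat \<Rightarrow> nat \<Rightarrow> complex" where
  "sl a N k = a (N - k, k)"

definition Tc :: "real \<Rightarrow> (nat \<times> nat \<Rightarrow> complex) \<Rightarrow> nat \<times> nat \<Rightarrow> complex" where
  "Tc L a = (\<lambda>(i,j). of_real (al L) * of_nat (Suc j) * a (i, Suc j)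
                  - of_real (be L) * (\<Sum>k\<le>j. a (i + j + 1 - k, k)))"

definition Mom :: "nat \<Rightarrow> (nat \<times> nat \<Rightarrow> complex) \<Rightarrow> bool" where
  "Mom n a \<longleftrightarrow> (\<forall>N p. p < n \<longrightarrow> (\<Sum>k\<le>N. a (N - k, k) * of_nat (k choose p)) = 0)"

lemma Tc_slice:
  assumes "j \<le> M"
  shows "Tc L a (M - j, j) = bseq L (sl a (Suc M)) j"
proof -
  have "a (M - j, Suc j) = sl a (Suc M) (Suc j)" by (simp add: sl_def)
  moreover have "(\<Sum>k\<le>j. a (M - j + j + 1 - k, k)) = (\<Sum>k\<le>j. sl a (Suc M) k)"
    using assms by (intro sum.cong) (auto simp: sl_def)
  ultimately show ?thesis by (simp add: Tc_def bseq_def)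
qed

lemma hockey:
  fixes x :: "nat \<Rightarrow> complex"
  shows "(\<Sum>j\<le>M. of_nat (j choose p) * (\<Sum>k\<le>j. x k))
       = of_nat (Suc M choose Suc p) * (\<Sum>k\<le>Suc M. x k) - (\<Sum>k\<le>Suc M. of_nat (k choose Suc p) * x k)"
proof (induction M)
  case 0
  then show ?case by (cases p) (auto simp: algebra_simps)
next
  case (Suc M)
  have pas: "(of_nat (Suc (Suc M) choose Suc p) :: complex) = of_nat (Suc M choose Suc p) + of_nat (Suc M choose p)"
    by simp
  show ?case
    unfolding sum.atMost_Suc[of _ "Suc M"] sum.atMost_Suc[of "\<lambda>j. of_nat (j choose p) * _ j" M] Suc.IH pas
    by (simp add: algebra_simps)
qed

lemma key1:
  fixes x :: "nat \<Rightarrow> complex"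
  shows "(\<Sum>j\<le>M. bseq L x j * of_nat (j choose p))
     = (of_real (al L) * of_nat (Suc p) + of_real (be L)) * (\<Sum>k\<le>Suc M. x k * of_nat (k choose Suc p))
       - of_real (be L) * of_nat (Suc M choose Suc p) * (\<Sum>k\<le>Suc M. x k)"
proof -
  have e1: "(\<Sum>j\<le>M. of_nat (Suc j) * x (Suc j) * of_nat (j choose p))
          = of_nat (Suc p) * (\<Sum>k\<le>Suc M. x k * of_nat (k choose Suc p))"
  proof -
    have "(\<Sum>j\<le>M. of_nat (Suc j) * x (Suc j) * of_nat (j choose p))
        = (\<Sum>j\<le>M. of_nat (Suc p) * (x (Suc j) * of_nat (Suc j choose Suc p)))"
    proof (intro sum.cong refl)
      fix j
      have "(of_nat (Suc j) :: complex) * of_nat (j choose p) = of_nat (Suc j choose Suc p) * of_nat (Suc p)"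
        by (metis Suc_times_binomial_eq of_nat_mult)
      then show "of_nat (Suc j) * x (Suc j) * of_nat (j choose p) = of_nat (Suc p) * (x (Suc j) * of_nat (Suc j choose Suc p))"
        by (metis mult.commute mult.left_commute)
    qed
    also have "\<dots> = of_nat (Suc p) * (\<Sum>k\<le>Suc M. x k * of_nat (k choose Suc p))"
      unfolding sum_distrib_left[symmetric] sum.atMost_Suc_shift by simp
    finally show ?thesis .
  qed
  have c: "(\<Sum>j\<le>M. bseq L x j * of_nat (j choose p))
     = of_real (al L) * (\<Sum>j\<le>M. of_nat (Suc j) * x (Suc j) * of_nat (j choose p))
       - of_real (be L) * (\<Sum>j\<le>M. of_nat (j choose p) * (\<Sum>k\<le>j. x k))"
    unfolding bseq_def sum_distrib_left sum_subtractf[symmetric]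
    by (intro sum.cong refl) (simp add: algebra_simps sum_distrib_left sum_distrib_right)
  show ?thesis
    unfolding c e1 hockey by (simp add: algebra_simps sum_distrib_left sum.distrib)
qed

lemma al_pos: "L > 1 \<Longrightarrow> al L > 0" by (simp add: al_def)
lemma be_pos: "L > 1 \<Longrightarrow> be L > 0" by (simp add: be_def)

lemma Mom_Tc:
  assumes "Mom n a" "n \<ge> 1"
  shows "Mom (n - 1) (Tc L a)"
  unfolding Mom_def
proof (intro allI impI)
  fix M p assume p: "p < n - 1"
  have "(\<Sum>k\<le>M. Tc L a (M - k, k) * of_nat (k choose p)) = (\<Sum>k\<le>M. bseq L (sl a (Suc M)) k * of_nat (k choose p))"
    by (intro sum.cong refl) (simp add: Tc_slice)
  also have "\<dots> = 0"
  proof -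
    have sp: "Suc p < n" "0 < n" using p by auto
    have z1: "(\<Sum>k\<le>Suc M. sl a (Suc M) k * of_nat (k choose Suc p)) = 0"
      using assms(1) sp unfolding Mom_def sl_def by blast
    have "(\<Sum>k\<le>Suc M. sl a (Suc M) k * of_nat (k choose 0)) = 0"
      using assms(1) sp unfolding Mom_def sl_def by blast
    then have z0: "(\<Sum>k\<le>Suc M. sl a (Suc M) k) = 0" by simp
    show ?thesis unfolding key1 z1 z0 by simp
  qed
  finally show "(\<Sum>k\<le>M. Tc L a (M - k, k) * of_nat (k choose p)) = 0" .
qed

lemma Tc_slice_deg:
  assumes "L > 1"
  shows "(\<Sum>j\<le>M. Tc L a (M - j, j) * cnj (Tc L a' (M - j, j)) * of_real (wt (L+1) j))
          + of_real (tt L (Suc M)) * (\<Sum>k\<le>Suc M. a (Suc M - k, k)) * cnj (\<Sum>k\<le>Suc M. a' (Suc M - k, k))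
       = (\<Sum>k\<le>Suc M. a (Suc M - k, k) * cnj (a' (Suc M - k, k)) * of_real (wt (L-1) k))"
proof -
  have "(\<Sum>j\<le>M. Tc L a (M - j, j) * cnj (Tc L a' (M - j, j)) * of_real (wt (L+1) j))
      = (\<Sum>j<Suc M. bseq L (sl a (Suc M)) j * cnj (bseq L (sl a' (Suc M)) j) * of_real (wt (L+1) j))"
    unfolding lessThan_Suc_atMost by (intro sum.cong refl) (simp add: Tc_slice)
  then show ?thesis using deg_identity[OF assms, where N="Suc M" and a="sl a (Suc M)" and a'="sl a' (Suc M)"]
    by (simp add: sl_def)
qed

primrec XS :: "real \<Rightarrow> (nat \<Rightarrow> complex) \<Rightarrow> complex \<Rightarrow> nat \<Rightarrow> complex \<times> complex" where
  "XS L c s 0 = (s, s)"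
| "XS L c s (Suc j) = (let y = (c j + of_real (be L) * snd (XS L c s j)) / (of_real (al L) * of_nat (Suc j))
                       in (y, snd (XS L c s j) + y))"

primrec GG :: "real \<Rightarrow> nat \<Rightarrow> real" where
  "GG L 0 = 1"
| "GG L (Suc j) = GG L j * (1 + be L / (al L * of_nat (Suc j)))"

lemma XS_snd: "snd (XS L c s j) = (\<Sum>k\<le>j. fst (XS L c s k))"
  by (induction j) (simp_all add: Let_def)

lemma XS_lin: "snd (XS L c s j) = snd (XS L c 0 j) + s * of_real (GG L j)"
  by (induction j) (simp_all add: Let_def algebra_simps add_divide_distrib)

lemma GG_pos: 
  assumes "L > 1" shows "GG L j > 0"
proof (induction j)
  case (Suc j)
  have "be L / (al L * of_nat (Suc j)) > 0" using al_pos[OF assms] be_pos[OF assms] by simp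
  then show ?case using Suc by simp
qed simp

lemma bseq_cong: "(\<And>k. k \<le> Suc j \<Longrightarrow> x k = y k) \<Longrightarrow> bseq L x j = bseq L y j"
  unfolding bseq_def by (simp)

lemma XS_bseq:
  assumes "L > 1"
  shows "bseq L (\<lambda>k. fst (XS L c s k)) j = c j"
proof -
  have "al L > 0" using al_pos[OF assms] .
  then have nz: "complex_of_real (al L) * of_nat (Suc j) \<noteq> 0" by (simp del: of_nat_Suc)
  have "bseq L (\<lambda>k. fst (XS L c s k)) j = of_real (al L) * of_nat (Suc j) * ((c j + of_real (be L) * snd (XS L c s j)) / (of_real (al L) * of_nat (Suc j))) - of_real (be L) * snd (XS L c s j)"
    unfolding bseq_def XS_snd[symmetric] by (simp add: Let_def)
  also have "\<dots> = c j" using nz by (simp del: of_nat_Suc)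
  finally show ?thesis .
qed

definition cs :: "(nat \<times> nat \<Rightarrow> complex) \<Rightarrow> nat \<Rightarrow> nat \<Rightarrow> complex" where
  "cs c M j = c (M - j, j)"

definition s0 :: "real \<Rightarrow> (nat \<times> nat \<Rightarrow> complex) \<Rightarrow> nat \<Rightarrow> complex" where
  "s0 L c M = - snd (XS L (cs c M) 0 (Suc M)) / of_real (GG L (Suc M))"

definition pre :: "real \<Rightarrow> (nat \<times> nat \<Rightarrow> complex) \<Rightarrow> nat \<times> nat \<Rightarrow> complex" where
  "pre L c = (\<lambda>(m,k). if m + k = 0 then 0 else fst (XS L (cs c (m + k - 1)) (s0 L c (m + k - 1)) k))"

lemma pre_slice: "k \<le> Suc M \<Longrightarrow> pre L c (Suc M - k, k) = fst (XS L (cs c M) (s0 L c M) k)"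
  by (auto simp: pre_def)

lemma pre_Tc:
  assumes "L > 1"
  shows "Tc L (pre L c) = c"
proof
  fix ij :: "nat \<times> nat"
  obtain i j where ij: "ij = (i,j)" by force
  define M where "M = i + j"
  have "Tc L (pre L c) (M - j, j) = bseq L (sl (pre L c) (Suc M)) j"
    using Tc_slice[of j M] M_def by simp
  also have "\<dots> = bseq L (\<lambda>k. fst (XS L (cs c M) (s0 L c M) k)) j"
    by (rule bseq_cong) (simp add: sl_def pre_slice M_def)
  also have "\<dots> = c (i, j)" using XS_bseq[OF assms] by (simp add: cs_def M_def)
  finally show "Tc L (pre L c) ij = c ij" by (simp add: ij M_def)
qed

lemma pre_sum0:
  assumes "L > 1"
  shows "(\<Sum>k\<le>N. pre L c (N - k, k)) = 0"
proof (cases N)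
  case 0
  then show ?thesis by (simp add: pre_def)
next
  case (Suc M)
  have "(\<Sum>k\<le>N. pre L c (N - k, k)) = (\<Sum>k\<le>Suc M. fst (XS L (cs c M) (s0 L c M) k))"
    unfolding Suc by (intro sum.cong refl) (simp add: pre_slice)
  also have "\<dots> = snd (XS L (cs c M) (s0 L c M) (Suc M))" by (rule XS_snd[symmetric])
  also have "\<dots> = snd (XS L (cs c M) 0 (Suc M)) + s0 L c M * of_real (GG L (Suc M))" by (rule XS_lin)
  also have "\<dots> = 0"
    using GG_pos[OF assms, of "Suc M"] unfolding s0_def by (simp del: XS.simps GG.simps)
  finally show ?thesis .
qed

lemma Mom_pre:
  assumes "L > 1" "Mom (n - 1) c" "n \<ge> 1"
  shows "Mom n (pre L c)"
  unfolding Mom_def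
proof (intro allI impI)
  fix N p assume p: "p < n"
  show "(\<Sum>k\<le>N. pre L c (N - k, k) * of_nat (k choose p)) = 0"
  proof (cases "p = 0")
    case True
    then show ?thesis using pre_sum0[OF assms(1)] by simp
  next
    case False
    then obtain q where q: "p = Suc q" by (cases p) auto
    show ?thesis
    proof (cases N)
      case 0
      then show ?thesis by (simp add: pre_def)
    next
      case (Suc M)
      define x where "x = sl (pre L c) (Suc M)"
      note k1 = key1[where L=L and x=x and M=M and p=q]
      have "(\<Sum>j\<le>M. bseq L x j * of_nat (j choose q)) = (\<Sum>j\<le>M. c (M - j, j) * of_nat (j choose q))"
      proof (intro sum.cong refl)
        fix j assume jM: "j \<in> {..M}"
        have "bseq L x j = bseq L (\<lambda>k. fst (XS L (cs c M) (s0 L c M) k)) j"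
          by (rule bseq_cong) (use jM in \<open>simp add: x_def sl_def pre_slice\<close>)
        then show "bseq L x j * of_nat (j choose q) = c (M - j, j) * of_nat (j choose q)"
          using XS_bseq[OF assms(1)] by (simp add: cs_def)
      qed
      also have "\<dots> = 0" using assms(2) p q unfolding Mom_def by auto
      finally have l0: "(\<Sum>j\<le>M. bseq L x j * of_nat (j choose q)) = 0" .
      have s0': "(\<Sum>k\<le>Suc M. x k) = 0" using pre_sum0[OF assms(1), where N="Suc M" and c=c] by (simp add: x_def sl_def)
      have nz: "of_real (al L) * of_nat (Suc q) + of_real (be L) \<noteq> (0::complex)"
      proof -
        have "al L * of_nat (Suc q) > 0" using al_pos[OF assms(1)] by (simp del: of_nat_Suc)
        then have "al L * of_nat (Suc q) + be L > 0" using be_pos[OF assms(1)] by linarith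
        then have "complex_of_real (al L * of_nat (Suc q) + be L) \<noteq> 0" by (metis of_real_eq_0_iff less_irrefl)
        then show ?thesis by simp
      qed
      have "(\<Sum>k\<le>Suc M. x k * of_nat (k choose Suc q)) = 0"
        using k1 l0 s0' nz by simp
      then show ?thesis by (simp add: Suc q x_def sl_def)
    qed
  qed
qed

definition Van :: "nat \<Rightarrow> (nat \<times> nat \<Rightarrow> complex) \<Rightarrow> bool" where
  "Van n a \<longleftrightarrow> (\<forall>N i j. i + j < n \<longrightarrow>
     (\<Sum>k\<le>N. a (N - k, k) * of_nat ((N - k) choose i) * of_nat (k choose j)) = 0)"

definition bp :: "nat \<Rightarrow> complex poly" where
  "bp m = (\<Prod>i<m. [:- of_nat i, 1:])"

lemma poly_bp: "poly (bp m) (of_nat k) = fact m * of_nat (k choose m)"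
proof -
  have "of_nat (k choose m) = (of_nat k gchoose m :: complex)" by (rule binomial_gbinomial)
  also have "\<dots> = (\<Prod>i=0..<m. of_nat k - of_nat i) / fact m" by (simp add: gbinomial_prod_rev)
  finally have "fact m * of_nat (k choose m) = (\<Prod>i=0..<m. (of_nat k - of_nat i :: complex))" by simp
  moreover have "poly (bp m) (of_nat k) = (\<Prod>i<m. (of_nat k - of_nat i :: complex))"
    by (simp add: bp_def poly_prod)
  ultimately show ?thesis by (simp add: atLeast0LessThan)
qed

lemma bp_nz: "[:- of_nat i, 1:] \<noteq> (0 :: complex poly)" by simp

lemma degree_bp: "degree (bp m) = m"
  unfolding bp_def by (subst degree_prod_sum_eq) auto

lemma lead_bp: "coeff (bp m) m = 1"
proof -
  have "lead_coeff (bp m) = 1" unfolding bp_def lead_coeff_prod by simp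
  then show ?thesis using degree_bp[of m] by simp
qed

lemma Mom_mono: "Mom n a \<Longrightarrow> m \<le> n \<Longrightarrow> Mom m a"
  unfolding Mom_def by auto

lemma polymom:
  assumes "Mom n a" "degree Q < n"
  shows "(\<Sum>k\<le>N. a (N - k, k) * poly Q (of_nat k)) = 0"
  using assms
proof (induction n arbitrary: Q)
  case 0
  then show ?case by simp
next
  case (Suc m)
  show ?case
  proof (cases "degree Q < m")
    case True
    have "Mom m a" by (rule Mom_mono[OF Suc.prems(1)]) simp
    then show ?thesis by (rule Suc.IH[OF _ True])
  next
    case False
    then have dQ: "degree Q = m" using Suc.prems(2) by simp
    define c where "c = lead_coeff Q"
    define R where "R = Q - smult c (bp m)"
    have dR: "degree R \<le> m" unfolding R_def using dQ degree_bp[of m]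
      by (metis degree_diff_le degree_smult_le le_trans order_refl)
    have cR: "coeff R m = 0" unfolding R_def c_def using dQ lead_bp[of m] by simp
    have R0: "(\<Sum>k\<le>N. a (N - k, k) * poly R (of_nat k)) = 0"
    proof (cases "R = 0")
      case True then show ?thesis by simp
    next
      case False
      then have "degree R \<noteq> m" using cR by (metis leading_coeff_0_iff)
      then have "degree R < m" using dR by simp
      have "Mom m a" by (rule Mom_mono[OF Suc.prems(1)]) simp
      then show ?thesis by (rule Suc.IH[OF _ \<open>degree R < m\<close>])
    qed
    have B0: "(\<Sum>k\<le>N. a (N - k, k) * poly (bp m) (of_nat k)) = 0"
    proof -
      have "(\<Sum>k\<le>N. a (N - k, k) * poly (bp m) (of_nat k)) = fact m * (\<Sum>k\<le>N. a (N - k, k) * of_nat (k choose m))"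
        by (simp add: poly_bp sum_distrib_left algebra_simps)
      also have "\<dots> = 0" using Suc.prems(1) unfolding Mom_def by simp
      finally show ?thesis .
    qed
    have "Q = R + smult c (bp m)" unfolding R_def by simp
    then have "(\<Sum>k\<le>N. a (N - k, k) * poly Q (of_nat k))
       = (\<Sum>k\<le>N. a (N - k, k) * poly R (of_nat k)) + c * (\<Sum>k\<le>N. a (N - k, k) * poly (bp m) (of_nat k))"
      by (simp add: algebra_simps sum.distrib sum_distrib_left)
    then show ?thesis using R0 B0 by simp
  qed
qed

lemma Mom_imp_Van:
  assumes "Mom n a" shows "Van n a"
  unfolding Van_def
proof (intro allI impI)
  fix N i j assume ij: "i + j < n"
  define Q where "Q = smult (1 / (fact i * fact j)) (pcompose (bp i) [:of_nat N, -1:] * bp j)"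
  have dQ: "degree Q < n"
  proof -
    have "degree (pcompose (bp i) [:of_nat N, -1:] * bp j) \<le> degree (pcompose (bp i) [:of_nat N, -1:]) + degree (bp j)"
      by (rule degree_mult_le)
    also have "\<dots> = i + j" by (simp add: degree_pcompose degree_bp)
    finally show ?thesis using ij unfolding Q_def by (meson degree_smult_le le_less_trans le_trans)
  qed
  have "(\<Sum>k\<le>N. a (N - k, k) * of_nat ((N - k) choose i) * of_nat (k choose j))
      = (\<Sum>k\<le>N. a (N - k, k) * poly Q (of_nat k))"
  proof (intro sum.cong refl)
    fix k assume "k \<in> {..N}"
    then have kN: "k \<le> N" by simp
    have "poly (pcompose (bp i) [:of_nat N, -1:]) (of_nat k) = poly (bp i) (of_nat (N - k))"
      using kN by (simp add: poly_pcompose of_nat_diff)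
    then have "poly Q (of_nat k) = of_nat ((N - k) choose i) * of_nat (k choose j)"
      unfolding Q_def by (simp add: poly_bp)
    then show "a (N - k, k) * of_nat ((N - k) choose i) * of_nat (k choose j) = a (N - k, k) * poly Q (of_nat k)"
      by simp
  qed
  also have "\<dots> = 0" by (rule polymom[OF assms dQ])
  finally show "(\<Sum>k\<le>N. a (N - k, k) * of_nat ((N - k) choose i) * of_nat (k choose j)) = 0" .
qed

lemma Van_imp_Mom:
  assumes "Van n a" shows "Mom n a"
  unfolding Mom_def
proof (intro allI impI)
  fix N p assume "p < n"
  then have "(\<Sum>k\<le>N. a (N - k, k) * of_nat ((N - k) choose 0) * of_nat (k choose p)) = 0"
    using assms[unfolded Van_def, rule_format, of 0 p N] by simp
  then show "(\<Sum>k\<le>N. a (N - k, k) * of_nat (k choose p)) = 0" by simp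
qed

lemma has_sum_diff:
  fixes f g :: "'a \<Rightarrow> 'b::topological_ab_group_add"
  assumes "(f has_sum a) A" "(g has_sum b) A"
  shows "((\<lambda>x. f x - g x) has_sum (a - b)) A"
proof -
  have "((\<lambda>x. - g x) has_sum - b) A" using has_sum_uminus[where f=g and a="-b" and A=A] assms(2) by simp
  then show ?thesis using has_sum_add[OF assms(1)] by fastforce
qed

lemma col_summable:
  fixes \<phi> :: "nat \<times> nat \<Rightarrow> complex"
  assumes "\<phi> summable_on UNIV"
  shows "(\<lambda>m. \<phi> (m, n)) summable_on UNIV" "(\<lambda>k. \<phi> (n, k)) summable_on UNIV"
proof -
  have "\<phi> summable_on range (\<lambda>m. (m, n))" by (rule summable_on_subset_banach[OF assms]) auto
  then show "(\<lambda>m. \<phi> (m, n)) summable_on UNIV" by (subst (asm) summable_on_reindex) (auto simp: inj_on_def o_def)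
  have "\<phi> summable_on range (\<lambda>k. (n, k))" by (rule summable_on_subset_banach[OF assms]) auto
  then show "(\<lambda>k. \<phi> (n, k)) summable_on UNIV" by (subst (asm) summable_on_reindex) (auto simp: inj_on_def o_def)
qed

lemma powser_unique0:
  fixes c :: "nat \<Rightarrow> complex"
  assumes "\<And>z. norm z < 1 \<Longrightarrow> ((\<lambda>n. c n * z ^ n) has_sum 0) UNIV"
  shows "c = (\<lambda>_. 0)"
proof -
  have "c k = 0" for k
  proof (induction k rule: less_induct)
    case (less k)
    have sm: "(\<lambda>n. c (n + k) * z ^ n) sums 0" if z: "z \<noteq> 0" "norm z < 1" for z
    proof -
      have "(\<lambda>n. c n * z ^ n) sums 0" using assms[OF z(2)] by (rule has_sum_imp_sums)
      then have "(\<lambda>n. c (n + k) * z ^ (n + k)) sums 0"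
        using less by (subst sums_zero_iff_shift) auto
      then have "(\<lambda>n. (c (n + k) * z ^ n) * z ^ k) sums 0" by (simp add: power_add algebra_simps)
      then have "(\<lambda>n. (c (n + k) * z ^ n) * z ^ k / z ^ k) sums (0 / z ^ k)" by (rule sums_divide)
      then show ?thesis using z(1) by simp
    qed
    have "((\<lambda>_. 0) \<longlongrightarrow> c (0 + k)) (at (0::complex))"
      by (rule powser_limit_0_strong[of 1]) (use sm in auto)
    then show "c k = 0" by (simp add: tendsto_const_iff)
  qed
  then show ?thesis by auto
qed

lemma group_snd:
  fixes \<phi> :: "nat \<times> nat \<Rightarrow> complex"
  assumes "(\<phi> has_sum S) UNIV"
  shows "((\<lambda>k. \<Sum>\<^sub>\<infinity>m. \<phi> (m, k)) has_sum S) UNIV"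
proof -
  have sw: "((\<lambda>(k,m). \<phi> (m,k)) has_sum S) (UNIV \<times> UNIV)"
    using assms has_sum_swap[where f=\<phi> and S=S and A=UNIV and B=UNIV] by simp
  have sm: "(\<lambda>(k,m). \<phi> (m,k)) summable_on (UNIV \<times> UNIV)" using sw by (rule has_sum_imp_summable)
  have inner: "(\<lambda>m. \<phi> (m,k)) summable_on UNIV" for k
    using summable_on_SigmaD1[of "\<lambda>k m. \<phi> (m,k)" UNIV "\<lambda>_. UNIV" k] sm by auto
  show ?thesis
    by (rule has_sum_Sigma'[OF sw]) (use inner in auto)
qed

lemma group_fst:
  fixes \<phi> :: "nat \<times> nat \<Rightarrow> complex"
  assumes "(\<phi> has_sum S) UNIV"
  shows "((\<lambda>m. \<Sum>\<^sub>\<infinity>k. \<phi> (m, k)) has_sum S) UNIV"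
proof -
  have sw: "(\<phi> has_sum S) (UNIV \<times> UNIV)" using assms by simp
  have sm: "(\<lambda>(m,k). \<phi> (m,k)) summable_on (UNIV \<times> UNIV)" using sw has_sum_imp_summable by fastforce
  have inner: "(\<lambda>k. \<phi> (m,k)) summable_on UNIV" for m
    using summable_on_SigmaD1[of "\<lambda>m k. \<phi> (m,k)" UNIV "\<lambda>_. UNIV" m] sm by auto
  show ?thesis
    by (rule has_sum_Sigma'[OF sw]) (use inner in auto)
qed

lemma expansion_unique:
  assumes "has_expansion a f" "has_expansion b f"
  shows "a = b"
proof -
  define d where "d = (\<lambda>mk. a mk - b mk)"
  have d0: "((\<lambda>(m,n). d (m,n) * z ^ m * w ^ n) has_sum 0) UNIV" if "norm z < 1" "norm w < 1" for z w
  proof -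
    have "((\<lambda>(m,n). a (m,n) * z ^ m * w ^ n - b (m,n) * z ^ m * w ^ n) has_sum (f (z,w) - f (z,w))) UNIV"
      using has_sum_diff[OF assms(1)[unfolded has_expansion_def, rule_format, OF conjI[OF that]]
                            assms(2)[unfolded has_expansion_def, rule_format, OF conjI[OF that]]]
      by (simp add: case_prod_unfold)
    then show ?thesis by (simp add: d_def case_prod_unfold algebra_simps)
  qed
  have inner0: "(\<Sum>\<^sub>\<infinity>m. d (m, n) * z ^ m) = 0" if z: "norm z < 1" for z n
  proof -
    have "(\<lambda>n. (\<Sum>\<^sub>\<infinity>m. d (m, n) * z ^ m)) = (\<lambda>_. 0)"
    proof (rule powser_unique0)
      fix w :: complex assume w: "norm w < 1"
      have "((\<lambda>n. \<Sum>\<^sub>\<infinity>m. d (m, n) * z ^ m * w ^ n) has_sum 0) UNIV"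
        using group_snd[OF d0[OF z w]] by simp
      moreover have "(\<Sum>\<^sub>\<infinity>m. d (m, n) * z ^ m * w ^ n) = (\<Sum>\<^sub>\<infinity>m. d (m, n) * z ^ m) * w ^ n" for n
        by (rule infsum_cmult_left')
      ultimately show "((\<lambda>n. (\<Sum>\<^sub>\<infinity>m. d (m, n) * z ^ m) * w ^ n) has_sum 0) UNIV" by simp
    qed
    then show ?thesis by metis
  qed
  have "d (m, n) = 0" for m n
  proof -
    have "(\<lambda>m. d (m, n)) = (\<lambda>_. 0)"
    proof (rule powser_unique0)
      fix z :: complex assume z: "norm z < 1"
      have "((\<lambda>(m,n). d (m,n) * z ^ m * 0 ^ n) has_sum 0) UNIV" using d0[OF z] by simp
      have s: "((\<lambda>m. d (m, n) * z ^ m) summable_on UNIV)"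
      proof -
        have "(\<lambda>(m,k). d (m,k) * z ^ m * of_real (1/2) ^ k) summable_on UNIV"
          using d0[OF z, of "of_real (1/2)"] has_sum_imp_summable by auto
        then have "(\<lambda>m. d (m,n) * z ^ m * of_real (1/2) ^ n) summable_on UNIV"
          using col_summable(1)[of "\<lambda>(m,k). d (m,k) * z ^ m * of_real (1/2) ^ k" n] by simp
        then show ?thesis using summable_on_cmult_left'[of "of_real (1/2) ^ n :: complex" "\<lambda>m. d (m, n) * z ^ m" UNIV] by simp
      qed
      then show "((\<lambda>m. d (m, n) * z ^ m) has_sum 0) UNIV"
        using inner0[OF z, of n] by (metis has_sum_infsum)
    qed
    then show ?thesis by metis
  qed
  then show ?thesis unfolding d_def by (auto simp: fun_eq_iff)
qed

lemma coeffs_eq: "has_expansion a f \<Longrightarrow> coeffs f = a"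
  unfolding coeffs_def by (metis (mono_tags) someI_ex expansion_unique)

definition dgs :: "(nat \<times> nat \<Rightarrow> nat \<times> nat)" where "dgs = (\<lambda>(N,k). (N - k, k))"

lemma bij_dgs': "bij_betw dgs (SIGMA N:UNIV. {..N}) UNIV"
  unfolding bij_betw_def
proof
  show "inj_on dgs (SIGMA N:UNIV. {..N})" by (auto simp: inj_on_def dgs_def)
  show "dgs ` (SIGMA N:UNIV. {..N}) = UNIV"
  proof safe
    fix m k :: nat
    have "(m + k, k) \<in> (SIGMA N:UNIV. {..N})" by simp
    moreover have "dgs (m + k, k) = (m, k)" by (simp add: dgs_def)
    ultimately show "(m, k) \<in> dgs ` (SIGMA N:UNIV. {..N})" by (metis image_eqI)
  qed auto
qed

lemma regroup:
  fixes \<phi> :: "nat \<times> nat \<Rightarrow> complex"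
  assumes "(\<phi> has_sum S) UNIV"
  shows "((\<lambda>N. \<Sum>k\<le>N. \<phi> (N - k, k)) has_sum S) UNIV"
proof -
  have "((\<lambda>x. \<phi> (dgs x)) has_sum S) (SIGMA N:UNIV. {..N})"
    using has_sum_reindex_bij_betw[OF bij_dgs'] assms by blast
  then show ?thesis
    by (rule has_sum_Sigma') (auto simp: dgs_def)
qed

lemma regroup_summable:
  fixes \<phi> :: "nat \<times> nat \<Rightarrow> real"
  assumes "\<And>x. \<phi> x \<ge> 0" "(\<lambda>N. \<Sum>k\<le>N. \<phi> (N - k, k)) summable_on UNIV"
  shows "\<phi> summable_on UNIV"
proof -
  have "(\<lambda>x. \<phi> (dgs x)) summable_on (SIGMA N:UNIV. {..N})"
    by (rule summable_on_SigmaI[where g="\<lambda>N. \<Sum>k\<le>N. \<phi> (N - k, k)"])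
       (use assms in \<open>auto simp: dgs_def\<close>)
  then show ?thesis using summable_on_reindex_bij_betw[OF bij_dgs'] by blast
qed

lemma regroup_summable_D:
  fixes \<phi> :: "nat \<times> nat \<Rightarrow> real"
  assumes "\<phi> summable_on UNIV"
  shows "(\<lambda>N. \<Sum>k\<le>N. \<phi> (N - k, k)) summable_on UNIV"
proof -
  have "((\<lambda>x. complex_of_real (\<phi> x)) has_sum of_real (infsum \<phi> UNIV)) UNIV"
    using assms by (simp add: has_sum_of_real_iff)
  from regroup[OF this] have "((\<lambda>N. complex_of_real (\<Sum>k\<le>N. \<phi> (N - k, k))) has_sum of_real (infsum \<phi> UNIV)) UNIV"
    by simp
  then show ?thesis unfolding has_sum_of_real_iff by (rule has_sum_imp_summable)
qed

lemma diag_has_sum: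
  assumes "has_expansion c g" "norm z < 1"
  shows "((\<lambda>N. (\<Sum>k\<le>N. c (N - k, k)) * z ^ N) has_sum g (z, z)) UNIV"
proof -
  have "((\<lambda>(m,k). c (m,k) * z ^ m * z ^ k) has_sum g (z,z)) UNIV"
    using assms unfolding has_expansion_def by blast
  from regroup[OF this] have "((\<lambda>N. \<Sum>k\<le>N. c (N - k, k) * z ^ (N - k) * z ^ k) has_sum g (z, z)) UNIV"
    by simp
  moreover have "(\<Sum>k\<le>N. c (N - k, k) * z ^ (N - k) * z ^ k) = (\<Sum>k\<le>N. c (N - k, k)) * z ^ N" for N
    unfolding sum_distrib_right
    by (intro sum.cong refl) (simp add: mult.assoc power_add[symmetric])
  ultimately show ?thesis by simp
qed

lemma diag_zero_iff:
  assumes "has_expansion c g"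
  shows "(\<forall>z. norm z < 1 \<longrightarrow> g (z, z) = 0) \<longleftrightarrow> (\<forall>N. (\<Sum>k\<le>N. c (N - k, k)) = 0)"
proof
  assume "\<forall>z. norm z < 1 \<longrightarrow> g (z, z) = 0"
  then have "(\<lambda>N. \<Sum>k\<le>N. c (N - k, k)) = (\<lambda>_. 0)"
    using diag_has_sum[OF assms] by (intro powser_unique0) auto
  then show "\<forall>N. (\<Sum>k\<le>N. c (N - k, k)) = 0" by metis
next
  assume z: "\<forall>N. (\<Sum>k\<le>N. c (N - k, k)) = 0"
  show "\<forall>z. norm z < 1 \<longrightarrow> g (z, z) = 0"
  proof (intro allI impI)
    fix z :: complex assume "norm z < 1"
    from diag_has_sum[OF assms this] z have "((\<lambda>N::nat. 0) has_sum g (z, z)) UNIV" by simp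
    then show "g (z, z) = 0" using has_sum_0_simp has_sum_unique by blast
  qed
qed

lemma bound_nq:
  fixes q :: real
  assumes "0 \<le> q" "q < 1"
  obtains B where "B > 0" "\<And>k. of_nat (Suc k) * q ^ k \<le> B"
proof -
  have "(\<lambda>n. of_nat n * q ^ n) \<longlonglongrightarrow> 0" using powser_times_n_limit_0[of q] assms by simp
  then have "Bseq (\<lambda>n. of_nat n * q ^ n)" by (rule convergent_imp_Bseq[OF convergentI])
  then obtain K where K: "K > 0" "\<And>n. norm (of_nat n * q ^ n) \<le> K" unfolding Bseq_def by blast
  have "of_nat (Suc k) * q ^ k \<le> K + 1" for k
  proof -
    have "of_nat k * q ^ k \<le> K" using K(2)[of k] assms by simp
    moreover have "q ^ k \<le> 1" using assms by (simp add: power_le_one)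
    ultimately show ?thesis by (simp add: algebra_simps)
  qed
  then show ?thesis using that[of "K + 1"] K by simp
qed

definition dwc :: "(nat \<times> nat \<Rightarrow> complex) \<Rightarrow> nat \<times> nat \<Rightarrow> complex" where
  "dwc a = (\<lambda>(m,k). of_nat (Suc k) * a (m, Suc k))"

lemma dw_expansion:
  assumes "has_expansion a f"
  shows "has_expansion (dwc a) (dw f)"
  unfolding has_expansion_def
proof (intro allI impI, elim conjE)
  fix z w :: complex assume z: "norm z < 1" and w: "norm w < 1"
  have F: "((\<lambda>(m,k). a (m,k) * z ^ m * y ^ k) has_sum f (z,y)) UNIV" if "norm y < 1" for y
    using assms z that unfolding has_expansion_def by blast
  define r where "r = (1 + norm w) / 2"
  have n0: "0 \<le> norm w" by simp
  have p1: "0 < 1 + norm w" by (simp add: add_pos_nonneg)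
  have r1: "norm w < r" unfolding r_def using w by (simp add: field_simps)
  have r2: "r < 1" unfolding r_def using w by (simp add: field_simps)
  have r3: "0 < r" unfolding r_def using p1 by simp
  note r = r1 r2 r3
  define R where "R = (of_real r :: complex)"
  have nR: "norm R = r" using r by (simp add: R_def)
  define c where "c k = (\<Sum>\<^sub>\<infinity>m. a (m,k) * z ^ m)" for k
  have S1: "(\<lambda>k. c k * y ^ k) sums f (z,y)" if "norm y < 1" for y
  proof -
    have "((\<lambda>k. \<Sum>\<^sub>\<infinity>m. a (m,k) * z ^ m * y ^ k) has_sum f (z,y)) UNIV"
      using group_snd[OF F[OF that]] by simp
    moreover have "(\<Sum>\<^sub>\<infinity>m. a (m,k) * z ^ m * y ^ k) = c k * y ^ k" for k
      unfolding c_def by (rule infsum_cmult_left')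
    ultimately show ?thesis by (intro has_sum_imp_sums) simp
  qed
  have S2: "summable (\<lambda>k. c k * R ^ k)" using S1[of R] nR r by (auto simp: sums_iff)
  have S3: "((\<lambda>y. \<Sum>k. c k * y ^ k) has_field_derivative (\<Sum>k. diffs c k * w ^ k)) (at w)"
    by (rule termdiffs_strong[OF S2]) (use nR r in simp)
  have S4: "((\<lambda>y. f (z, y)) has_field_derivative (\<Sum>k. diffs c k * w ^ k)) (at w)"
  proof (rule has_field_derivative_transform_within_open[OF S3, of "ball 0 1"])
    show "w \<in> ball 0 1" using w by simp
    fix y :: complex assume "y \<in> ball 0 1"
    then show "(\<Sum>k. c k * y ^ k) = f (z, y)" using S1[of y] by (simp add: sums_iff)
  qed simp
  have S5: "dw f (z, w) = (\<Sum>k. diffs c k * w ^ k)"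
    unfolding dw_def using S4 by (simp add: DERIV_imp_deriv)
  define q where "q = norm w / r"
  have q: "0 \<le> q" "q < 1" using r by (auto simp: q_def)
  obtain B where B: "B > 0" "\<And>k. of_nat (Suc k) * q ^ k \<le> B" using bound_nq[OF q] by blast
  have G0: "(\<lambda>(m,k). a (m,k) * z ^ m * R ^ k) summable_on UNIV"
    using F[of R] nR r by (auto intro: has_sum_imp_summable)
  have G1: "(\<lambda>(m,k). a (m, Suc k) * z ^ m * R ^ Suc k) summable_on UNIV"
  proof -
    have "(\<lambda>(m,k). a (m,k) * z ^ m * R ^ k) summable_on range (\<lambda>(m,k). (m, Suc k))"
      by (rule summable_on_subset_banach[OF G0]) auto
    then show ?thesis
      by (subst (asm) summable_on_reindex) (auto simp: inj_on_def o_def case_prod_unfold)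
  qed
  define \<psi> where "\<psi> = (\<lambda>(m,k). dwc a (m,k) * z ^ m * w ^ k)"
  have Psum: "\<psi> summable_on UNIV"
  proof -
    have Gs: "(\<lambda>x. of_real (B / r) * (\<lambda>(m,k). a (m, Suc k) * z ^ m * R ^ Suc k) x) summable_on UNIV"
      using summable_on_cmult_right[OF G1] by blast
    have Gn: "(\<lambda>x. norm (of_real (B / r) * (\<lambda>(m,k). a (m, Suc k) * z ^ m * R ^ Suc k) x)) summable_on UNIV"
      using summable_on_iff_abs_summable_on_complex[THEN iffD1, OF Gs] .
    have "(\<lambda>x. norm (\<psi> x)) summable_on UNIV"
    proof (rule summable_on_comparison_test[OF Gn])
      fix x :: "nat \<times> nat"
      obtain m k where x: "x = (m,k)" by force
      have "norm (\<psi> x) = of_nat (Suc k) * norm (a (m, Suc k)) * norm z ^ m * norm w ^ k"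
        by (simp add: \<psi>_def dwc_def x norm_mult norm_power del: of_nat_Suc)
      also have "norm w ^ k = q ^ k * r ^ k" using r by (simp add: q_def power_divide)
      also have "of_nat (Suc k) * norm (a (m, Suc k)) * norm z ^ m * (q ^ k * r ^ k)
          = (of_nat (Suc k) * q ^ k) * (norm (a (m, Suc k)) * norm z ^ m * r ^ k)" by (simp add: algebra_simps)
      also have "\<dots> \<le> B * (norm (a (m, Suc k)) * norm z ^ m * r ^ k)"
        by (rule mult_right_mono[OF B(2)]) (use r in simp)
      also have "\<dots> = (B / r) * (norm (a (m, Suc k)) * norm z ^ m * r ^ Suc k)" using r by simp
      also have "\<dots> = norm (of_real (B / r) * (\<lambda>(m,k). a (m, Suc k) * z ^ m * R ^ Suc k) x)"
        using B r nR by (simp add: x norm_mult norm_power abs_of_pos del: of_real_divide power_Suc)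
      finally show "norm (\<psi> x) \<le> norm (of_real (B / r) * (\<lambda>(m,k). a (m, Suc k) * z ^ m * R ^ Suc k) x)" .
    qed simp
    then show ?thesis by (rule Infinite_Sum.abs_summable_summable)
  qed
  define T where "T = infsum \<psi> UNIV"
  have PT: "(\<psi> has_sum T) UNIV" using Psum by (simp add: T_def)
  have "((\<lambda>k. \<Sum>\<^sub>\<infinity>m. \<psi> (m, k)) has_sum T) UNIV" by (rule group_snd[OF PT])
  moreover have "(\<Sum>\<^sub>\<infinity>m. \<psi> (m, k)) = diffs c k * w ^ k" for k
  proof -
    have "(\<Sum>\<^sub>\<infinity>m. \<psi> (m, k)) = (\<Sum>\<^sub>\<infinity>m. of_nat (Suc k) * (a (m, Suc k) * z ^ m) * w ^ k)"
      by (simp add: \<psi>_def dwc_def algebra_simps)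
    also have "\<dots> = of_nat (Suc k) * c (Suc k) * w ^ k"
      unfolding infsum_cmult_left' infsum_cmult_right' c_def by simp
    finally show ?thesis by (simp add: diffs_def)
  qed
  ultimately have "(\<lambda>k. diffs c k * w ^ k) sums T" by (intro has_sum_imp_sums) simp
  then have "T = dw f (z, w)" unfolding S5 by (simp add: sums_iff)
  then show "((\<lambda>(m, n). dwc a (m, n) * z ^ m * w ^ n) has_sum dw f (z, w)) UNIV"
    using PT unfolding \<psi>_def by simp
qed

definition fsw :: "(complex \<times> complex \<Rightarrow> complex) \<Rightarrow> complex \<times> complex \<Rightarrow> complex" where
  "fsw f = (\<lambda>(z,w). f (w,z))"
definition asw :: "(nat \<times> nat \<Rightarrow> complex) \<Rightarrow> nat \<times> nat \<Rightarrow> complex" where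
  "asw a = (\<lambda>(m,k). a (k,m))"
definition dzc :: "(nat \<times> nat \<Rightarrow> complex) \<Rightarrow> nat \<times> nat \<Rightarrow> complex" where
  "dzc a = (\<lambda>(m,k). of_nat (Suc m) * a (Suc m, k))"

lemma swap_expansion:
  assumes "has_expansion a f"
  shows "has_expansion (asw a) (fsw f)"
  unfolding has_expansion_def
proof (intro allI impI)
  fix z w :: complex assume zw: "norm z < 1 \<and> norm w < 1"
  have "((\<lambda>(m,n). a (m,n) * w ^ m * z ^ n) has_sum f (w,z)) (UNIV \<times> UNIV)"
    using assms zw unfolding has_expansion_def by simp
  then have "((\<lambda>(x,y). (\<lambda>(m,n). a (m,n) * w ^ m * z ^ n) (y,x)) has_sum f (w,z)) (UNIV \<times> UNIV)"
    using has_sum_swap by blast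
  then show "((\<lambda>(m, n). asw a (m, n) * z ^ m * w ^ n) has_sum fsw f (z, w)) UNIV"
    by (simp add: asw_def fsw_def algebra_simps)
qed

lemma dz_fsw: "dz f = fsw (dw (fsw f))"
  by (simp add: fun_eq_iff dz_def dw_def fsw_def)

lemma dzc_asw: "dzc a = asw (dwc (asw a))"
  by (simp add: fun_eq_iff dzc_def dwc_def asw_def)

lemma asw_asw[simp]: "asw (asw a) = a" by (simp add: asw_def fun_eq_iff)
lemma fsw_fsw[simp]: "fsw (fsw f) = f" by (simp add: fsw_def fun_eq_iff)

lemma dz_expansion:
  assumes "has_expansion a f"
  shows "has_expansion (dzc a) (dz f)"
  unfolding dz_fsw dzc_asw
  by (rule swap_expansion[OF dw_expansion[OF swap_expansion[OF assms]]])

lemma dw_iter_expansion: "has_expansion a f \<Longrightarrow> has_expansion ((dwc ^^ j) a) ((dw ^^ j) f)"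
  by (induction j) (auto intro: dw_expansion)

lemma dz_iter_expansion: "has_expansion a f \<Longrightarrow> has_expansion ((dzc ^^ i) a) ((dz ^^ i) f)"
  by (induction i) (auto intro: dz_expansion)

lemma dwc_iter: "(dwc ^^ j) a (m,k) = (fact (k + j) / fact k) * a (m, k + j)"
proof (induction j arbitrary: k)
  case 0 then show ?case by simp
next
  case (Suc j)
  have "(dwc ^^ Suc j) a (m,k) = of_nat (Suc k) * ((dwc ^^ j) a (m, Suc k))"
    by (simp add: dwc_def)
  also have "\<dots> = of_nat (Suc k) * ((fact (Suc k + j) / fact (Suc k)) * a (m, Suc k + j))"
    using Suc.IH by simp
  also have "\<dots> = (fact (k + Suc j) / fact k) * a (m, k + Suc j)"
    by (simp add: field_simps del: of_nat_Suc)
  finally show ?case .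
qed

lemma dzc_iter: "(dzc ^^ i) a (m,k) = (fact (m + i) / fact m) * a (m + i, k)"
proof (induction i arbitrary: m)
  case 0 then show ?case by simp
next
  case (Suc i)
  have "(dzc ^^ Suc i) a (m,k) = of_nat (Suc m) * ((dzc ^^ i) a (Suc m, k))"
    by (simp add: dzc_def)
  also have "\<dots> = of_nat (Suc m) * ((fact (Suc m + i) / fact (Suc m)) * a (Suc m + i, k))"
    using Suc.IH by simp
  also have "\<dots> = (fact (m + Suc i) / fact m) * a (m + Suc i, k)"
    by (simp add: field_simps del: of_nat_Suc)
  finally show ?case .
qed

lemma fact_ratio: "(fact (m + i) / fact m :: complex) = fact i * of_nat ((m + i) choose i)"
proof -
  have "(of_nat ((m + i) choose i) :: complex) = fact (m + i) / (fact i * fact (m + i - i))"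
    by (rule binomial_fact) simp
  then have "(of_nat ((m + i) choose i) :: complex) = fact (m + i) / (fact i * fact m)" by simp
  then show ?thesis by (simp add: field_simps)
qed

definition GG2 :: "(nat \<times> nat \<Rightarrow> complex) \<Rightarrow> nat \<Rightarrow> nat \<Rightarrow> nat \<Rightarrow> nat \<Rightarrow> complex" where
  "GG2 a D i j k = a (D - k, k) * of_nat ((D - k) choose i) * of_nat (k choose j)"

lemma sum_reindex_G:
  "(\<Sum>k\<le>N. ((dzc ^^ i) ((dwc ^^ j) a)) (N - k, k))
     = fact i * fact j * (\<Sum>k\<le>N + i + j. GG2 a (N + i + j) i j k)"
proof -
  define D where "D = N + i + j"
  have "(\<Sum>k\<le>N. ((dzc ^^ i) ((dwc ^^ j) a)) (N - k, k)) = (\<Sum>k\<le>N. fact i * fact j * GG2 a D i j (k + j))"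
  proof (intro sum.cong refl)
    fix k assume "k \<in> {..N}"
    then have kN: "k \<le> N" by simp
    have e: "D - (k + j) = N - k + i" using kN by (simp add: D_def)
    show "((dzc ^^ i) ((dwc ^^ j) a)) (N - k, k) = fact i * fact j * GG2 a D i j (k + j)"
      unfolding dzc_iter dwc_iter fact_ratio GG2_def e by (simp add: algebra_simps)
  qed
  also have "\<dots> = fact i * fact j * (\<Sum>k\<in>{j..N+j}. GG2 a D i j k)"
    unfolding sum_distrib_left[symmetric] atMost_atLeast0
    using sum.shift_bounds_cl_nat_ivl[of "GG2 a D i j" 0 j N] by (simp add: add.commute)
  also have "(\<Sum>k\<in>{j..N+j}. GG2 a D i j k) = (\<Sum>k\<le>D. GG2 a D i j k)"
  proof (rule sum.mono_neutral_left)
    show "{j..N + j} \<subseteq> {..D}" by (auto simp: D_def)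
    show "\<forall>k\<in>{..D} - {j..N + j}. GG2 a D i j k = 0"
    proof
      fix k assume "k \<in> {..D} - {j..N + j}"
      then have "k < j \<or> D - k < i" by (auto simp: D_def)
      then show "GG2 a D i j k = 0" by (auto simp: GG2_def)
    qed
  qed simp_all
  finally show ?thesis by (simp add: D_def)
qed

lemma vanishes_iff_Van:
  assumes "has_expansion a f"
  shows "vanishes_to_order n f \<longleftrightarrow> Van n a"
proof -
  have fz: "(fact i * fact j * (X::complex) = 0) \<longleftrightarrow> X = 0" for i j X by simp
  have exp: "has_expansion ((dzc ^^ i) ((dwc ^^ j) a)) ((dz ^^ i) ((dw ^^ j) f))" for i j
    by (intro dz_iter_expansion dw_iter_expansion assms)
  have "vanishes_to_order n f \<longleftrightarrow>
     (\<forall>i j. i + j < n \<longrightarrow> (\<forall>N. (\<Sum>k\<le>N. ((dzc ^^ i) ((dwc ^^ j) a)) (N - k, k)) = 0))"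
  proof -
    have e: "(\<forall>z. norm z < 1 \<longrightarrow> ((dz ^^ i) ((dw ^^ j) f)) (z, z) = 0) \<longleftrightarrow>
             (\<forall>N. (\<Sum>k\<le>N. ((dzc ^^ i) ((dwc ^^ j) a)) (N - k, k)) = 0)" for i j
      by (rule diag_zero_iff[OF exp])
    show ?thesis unfolding vanishes_to_order_def by (simp only: e)
  qed
  also have "\<dots> \<longleftrightarrow> (\<forall>i j. i + j < n \<longrightarrow> (\<forall>N. (\<Sum>k\<le>N + i + j. GG2 a (N + i + j) i j k) = 0))"
    by (simp only: sum_reindex_G fz)
  also have "\<dots> \<longleftrightarrow> Van n a"
  proof
    assume H: "\<forall>i j. i + j < n \<longrightarrow> (\<forall>N. (\<Sum>k\<le>N + i + j. GG2 a (N + i + j) i j k) = 0)"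
    show "Van n a" unfolding Van_def
    proof (intro allI impI)
      fix D i j assume ij: "i + j < n"
      show "(\<Sum>k\<le>D. a (D - k, k) * of_nat ((D - k) choose i) * of_nat (k choose j)) = 0"
      proof (cases "i + j \<le> D")
        case True
        define N where "N = D - (i + j)"
        have DN: "D = N + i + j" using True by (simp add: N_def)
        have "\<forall>N. (\<Sum>k\<le>N + i + j. GG2 a (N + i + j) i j k) = 0" using H ij by blast
        then have "(\<Sum>k\<le>N + i + j. GG2 a (N + i + j) i j k) = 0" by (rule spec)
        then show ?thesis unfolding GG2_def DN .
      next
        case False
        have zz: "a (D - k, k) * of_nat ((D - k) choose i) * of_nat (k choose j) = 0" if kD: "k \<le> D" for k
        proof (cases "k < j")
          case True then show ?thesis by simp
        next
          case False
          then have "D - k < i" using \<open>\<not> i + j \<le> D\<close> kD by arith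
          then show ?thesis by simp
        qed
        show ?thesis by (rule sum.neutral) (use zz in auto)
      qed
    qed
  next
    assume "Van n a"
    then show "\<forall>i j. i + j < n \<longrightarrow> (\<forall>N. (\<Sum>k\<le>N + i + j. GG2 a (N + i + j) i j k) = 0)"
      unfolding Van_def GG2_def by (intro allI impI) simp
  qed
  finally show ?thesis .
qed

definition qc :: "(nat \<times> nat \<Rightarrow> complex) \<Rightarrow> nat \<times> nat \<Rightarrow> complex" where
  "qc a = (\<lambda>(i,j). \<Sum>k\<le>j. a (i + j + 1 - k, k))"

definition hm :: "complex \<Rightarrow> complex \<Rightarrow> nat \<Rightarrow> complex" where
  "hm z w m = (\<Sum>i<m. z ^ i * w ^ (m - 1 - i))"

lemma hm_Suc: "hm z w (Suc m) = z ^ m + w * hm z w m"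
proof -
  have "(\<Sum>i<m. z ^ i * w ^ (m - i)) = w * (\<Sum>i<m. z ^ i * w ^ (m - 1 - i))"
    unfolding sum_distrib_left
  proof (intro sum.cong refl)
    fix i assume "i \<in> {..<m}"
    then have "m - i = Suc (m - 1 - i)" by auto
    then show "z ^ i * w ^ (m - i) = w * (z ^ i * w ^ (m - 1 - i))" by (simp add: algebra_simps)
  qed
  then show ?thesis unfolding hm_def by simp
qed

lemma hm_diff: "(z - w) * hm z w m = z ^ m - w ^ m"
proof (induction m)
  case 0 then show ?case by (simp add: hm_def)
next
  case (Suc m)
  have "(z - w) * hm z w (Suc m) = (z - w) * z ^ m + w * ((z - w) * hm z w m)"
    by (simp add: hm_Suc algebra_simps)
  also have "\<dots> = (z - w) * z ^ m + w * (z ^ m - w ^ m)" using Suc.IH by simp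
  also have "\<dots> = z ^ Suc m - w ^ Suc m" by (simp add: algebra_simps)
  finally show ?case .
qed

lemma hm_eq: "hm w w (Suc m) = of_nat (Suc m) * w ^ m"
  by (induction m) (simp_all add: hm_Suc hm_def[of w w 0] algebra_simps)

lemma hm_norm_le:
  fixes z w :: complex
  assumes "norm z \<le> \<rho>" "norm w \<le> \<rho>"
  shows "(\<Sum>i<m. norm (z ^ i * w ^ (m - 1 - i))) \<le> of_nat m * \<rho> ^ (m - 1)"
proof -
  have \<rho>0: "0 \<le> \<rho>" using assms(1) norm_ge_zero[of z] by linarith
  have "(\<Sum>i<m. norm (z ^ i * w ^ (m - 1 - i))) \<le> (\<Sum>i<m. \<rho> ^ (m - 1))"
  proof (intro sum_mono)
    fix i assume "i \<in> {..<m}"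
    then have "i + (m - 1 - i) = m - 1" by auto
    have "norm (z ^ i * w ^ (m - 1 - i)) = norm z ^ i * norm w ^ (m - 1 - i)" by (simp add: norm_mult norm_power)
    also have "\<dots> \<le> \<rho> ^ i * \<rho> ^ (m - 1 - i)"
      by (intro mult_mono power_mono) (use assms \<rho>0 in auto)
    also have "\<dots> = \<rho> ^ (m - 1)" by (subst power_add[symmetric]) (simp only: \<open>i + (m - 1 - i) = m - 1\<close>)
    finally show "norm (z ^ i * w ^ (m - 1 - i)) \<le> \<rho> ^ (m - 1)" .
  qed
  then show ?thesis by simp
qed

lemma Q_has_sum:
  assumes exp: "has_expansion a f" and z: "norm z < 1" and w: "norm w < 1"
  shows "((\<lambda>(i,j). qc a (i,j) * z ^ i * w ^ j) has_sum
           (if z = w then dz f (w,w) else (f (z,w) - f (w,w)) / (z - w))) UNIV"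
proof -
  define \<rho> where "\<rho> = max (norm z) (norm w)"
  have \<rho>: "norm z \<le> \<rho>" "norm w \<le> \<rho>" "0 \<le> \<rho>" "\<rho> < 1" using z w by (auto simp: \<rho>_def le_max_iff_disj)
  define r where "r = (1 + \<rho>) / 2"
  have r1: "\<rho> < r" unfolding r_def using \<rho> by (simp add: field_simps)
  have r2: "r < 1" unfolding r_def using \<rho> by (simp add: field_simps)
  have r3: "0 < r" using r1 \<rho> by simp
  define R where "R = (of_real r :: complex)"
  have nR: "norm R = r" using r3 by (simp add: R_def)
  have F: "((\<lambda>(m,k). a (m,k) * x ^ m * y ^ k) has_sum f (x,y)) UNIV" if "norm x < 1" "norm y < 1" for x y
    using exp that unfolding has_expansion_def by blast
  have G0: "(\<lambda>(m,k). a (m,k) * R ^ m * R ^ k) summable_on UNIV"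
    using F[of R R] nR r2 by (auto intro: has_sum_imp_summable)
  have G0n: "(\<lambda>x. norm ((\<lambda>(m,k). a (m,k) * R ^ m * R ^ k) x)) summable_on UNIV"
    using summable_on_iff_abs_summable_on_complex[THEN iffD1, OF G0] .
  define q where "q = \<rho> / r"
  have q: "0 \<le> q" "q < 1" using \<rho> r1 r3 by (auto simp: q_def)
  obtain B where B: "B > 0" "\<And>k. of_nat (Suc k) * q ^ k \<le> B" using bound_nq[OF q] by blast
  define A where "A = (SIGMA mk:(UNIV :: (nat \<times> nat) set). {..<fst mk})"
  define \<Phi> where "\<Phi> = (\<lambda>((m,k),i). a (m,k) * z ^ i * w ^ (m - 1 - i + k))"
  have inner_norm: "(\<Sum>i<m. norm (\<Phi> ((m,k),i))) \<le> (B / r) * norm (a (m,k) * R ^ m * R ^ k)" for m k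
  proof -
    have "(\<Sum>i<m. norm (\<Phi> ((m,k),i))) = norm (a (m,k)) * norm w ^ k * (\<Sum>i<m. norm (z ^ i * w ^ (m - 1 - i)))"
      unfolding sum_distrib_left
      by (intro sum.cong refl) (simp add: \<Phi>_def norm_mult norm_power power_add algebra_simps)
    also have "\<dots> \<le> norm (a (m,k)) * norm w ^ k * (of_nat m * \<rho> ^ (m - 1))"
      by (intro mult_left_mono hm_norm_le \<rho>) simp_all
    also have "\<dots> \<le> norm (a (m,k)) * r ^ k * ((B / r) * r ^ m)"
    proof (rule mult_mono)
      show "norm (a (m,k)) * norm w ^ k \<le> norm (a (m,k)) * r ^ k" using \<rho> r1 by (intro mult_left_mono power_mono) auto
      show "of_nat m * \<rho> ^ (m - 1) \<le> (B / r) * r ^ m"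
      proof (cases m)
        case 0 then show ?thesis using B r3 by simp
      next
        case (Suc m')
        have "\<rho> ^ m' = q ^ m' * r ^ m'" using r3 by (simp add: q_def power_divide)
        then have "of_nat m * \<rho> ^ (m - 1) = (of_nat (Suc m') * q ^ m') * r ^ m'" by (simp add: Suc)
        also have "\<dots> \<le> B * r ^ m'" by (rule mult_right_mono[OF B(2)]) (use r3 in simp)
        also have "\<dots> = (B / r) * r ^ m" using r3 by (simp add: Suc)
        finally show ?thesis .
      qed
    qed (use r3 B \<rho> in auto)
    also have "\<dots> = (B / r) * norm (a (m,k) * R ^ m * R ^ k)"
      using nR by (simp add: norm_mult norm_power)
    finally show ?thesis .
  qed
  have Phi_sum: "\<Phi> summable_on A"
  proof -
    have "(\<lambda>x. norm (\<Phi> x)) summable_on A"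
      unfolding A_def
    proof (rule summable_on_SigmaI[where g="\<lambda>mk. \<Sum>i<fst mk. norm (\<Phi> (mk,i))"])
      show "((\<lambda>i. norm (\<Phi> (mk, i))) has_sum (\<Sum>i<fst mk. norm (\<Phi> (mk,i)))) {..<fst mk}" for mk
        by (rule has_sum_finiteI) auto
      show "(\<lambda>mk. \<Sum>i<fst mk. norm (\<Phi> (mk,i))) summable_on UNIV"
      proof (rule summable_on_comparison_test[OF summable_on_cmult_right[OF G0n, of "B / r"]])
        fix mk :: "nat \<times> nat"
        obtain m k where mk: "mk = (m,k)" by force
        show "(\<Sum>i<fst mk. norm (\<Phi> (mk,i))) \<le> (B / r) * norm ((\<lambda>(m,k). a (m,k) * R ^ m * R ^ k) mk)"
          using inner_norm[of m k] by (simp add: mk)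
        show "0 \<le> (\<Sum>i<fst mk. norm (\<Phi> (mk,i)))" by (simp add: sum_nonneg)
      qed
    qed simp
    then show ?thesis by (rule Infinite_Sum.abs_summable_summable)
  qed
  define S where "S = infsum \<Phi> A"
  have PS: "(\<Phi> has_sum S) A" using Phi_sum by (simp add: S_def)
  have G1: "((\<lambda>(m,k). a (m,k) * w ^ k * hm z w m) has_sum S) UNIV"
  proof -
    have "((\<lambda>mk. \<Sum>i<fst mk. \<Phi> (mk,i)) has_sum S) UNIV"
      by (rule has_sum_Sigma'[OF PS[unfolded A_def]]) (rule has_sum_finiteI, auto)
    moreover have ee: "(\<Sum>i<m. \<Phi> ((m,k),i)) = a (m,k) * w ^ k * hm z w m" for m k
      unfolding hm_def sum_distrib_left
      by (intro sum.cong refl) (simp add: \<Phi>_def power_add algebra_simps)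
    moreover have "(\<lambda>mk. \<Sum>i<fst mk. \<Phi> (mk,i)) = (\<lambda>(m,k). a (m,k) * w ^ k * hm z w m)"
    proof (rule ext)
      fix mk :: "nat \<times> nat" obtain m k where "mk = (m,k)" by force
      then show "(\<Sum>i<fst mk. \<Phi> (mk,i)) = (\<lambda>(m,k). a (m,k) * w ^ k * hm z w m) mk" using ee by simp
    qed
    ultimately show ?thesis by simp
  qed
  have G2: "((\<lambda>(i,j). qc a (i,j) * z ^ i * w ^ j) has_sum S) UNIV"
  proof -
    define A2 where "A2 = (SIGMA ij:(UNIV :: (nat \<times> nat) set). {..snd ij})"
    define \<Psi> where "\<Psi> = (\<lambda>((i,j),k). a (i + j + 1 - k, k) * z ^ i * w ^ j)"
    have "(\<Psi> has_sum S) A2 \<longleftrightarrow> (\<Phi> has_sum S) A"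
    proof (rule has_sum_reindex_bij_witness[where j="\<lambda>((i,j),k). ((i + j + 1 - k, k), i)"
                                              and i="\<lambda>((m,k),i). ((i, m - 1 - i + k), k)"])
      show "\<And>x. x \<in> A2 \<Longrightarrow> (case case x of (x, xa) \<Rightarrow> (case x of (i, j) \<Rightarrow> \<lambda>k. ((i + j + 1 - k, k), i)) xa of
           (x, xa) \<Rightarrow> (case x of (m, k) \<Rightarrow> \<lambda>i. ((i, m - 1 - i + k), k)) xa) = x"
        by (auto simp: A2_def)
      show "\<And>x. x \<in> A2 \<Longrightarrow> (case x of (x, xa) \<Rightarrow> (case x of (i, j) \<Rightarrow> \<lambda>k. ((i + j + 1 - k, k), i)) xa) \<in> A"
        by (auto simp: A2_def A_def)
      show "\<And>x. x \<in> A \<Longrightarrow> (case case x of (x, xa) \<Rightarrow> (case x of (m, k) \<Rightarrow> \<lambda>i. ((i, m - 1 - i + k), k)) xa of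
           (x, xa) \<Rightarrow> (case x of (i, j) \<Rightarrow> \<lambda>k. ((i + j + 1 - k, k), i)) xa) = x"
        by (auto simp: A_def)
      show "\<And>x. x \<in> A \<Longrightarrow> (case x of (x, xa) \<Rightarrow> (case x of (m, k) \<Rightarrow> \<lambda>i. ((i, m - 1 - i + k), k)) xa) \<in> A2"
        by (auto simp: A2_def A_def)
      show "\<And>x. x \<in> A2 \<Longrightarrow> \<Phi> (case x of (x, xa) \<Rightarrow> (case x of (i, j) \<Rightarrow> \<lambda>k. ((i + j + 1 - k, k), i)) xa) = \<Psi> x"
        by (auto simp: A2_def \<Phi>_def \<Psi>_def)
    qed simp
    then have PsiS: "(\<Psi> has_sum S) A2" using PS by simp
    have "((\<lambda>ij. \<Sum>k\<le>snd ij. \<Psi> (ij,k)) has_sum S) UNIV"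
      by (rule has_sum_Sigma'[OF PsiS[unfolded A2_def]]) (rule has_sum_finiteI, auto)
    moreover have ee: "(\<Sum>k\<le>j. \<Psi> ((i,j),k)) = qc a (i,j) * z ^ i * w ^ j" for i j
      unfolding qc_def by (simp add: \<Psi>_def sum_distrib_right mult.assoc)
    moreover have "(\<lambda>ij. \<Sum>k\<le>snd ij. \<Psi> (ij,k)) = (\<lambda>(i,j). qc a (i,j) * z ^ i * w ^ j)"
    proof (rule ext)
      fix ij :: "nat \<times> nat" obtain i j where "ij = (i,j)" by force
      then show "(\<Sum>k\<le>snd ij. \<Psi> (ij,k)) = (\<lambda>(i,j). qc a (i,j) * z ^ i * w ^ j) ij" using ee by simp
    qed
    ultimately show ?thesis by simp
  qed
  have "S = (if z = w then dz f (w,w) else (f (z,w) - f (w,w)) / (z - w))"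
  proof (cases "z = w")
    case False
    have "((\<lambda>(m,k). (a (m,k) * z ^ m * w ^ k - a (m,k) * w ^ m * w ^ k) / (z - w)) has_sum
            ((f (z,w) - f (w,w)) / (z - w))) UNIV"
      using has_sum_divide_const[OF has_sum_diff[OF F[OF z w] F[OF w w]], of "z - w"]
      by (simp add: case_prod_unfold)
    moreover have "(a (m,k) * z ^ m * w ^ k - a (m,k) * w ^ m * w ^ k) / (z - w) = a (m,k) * w ^ k * hm z w m" for m k
    proof -
      have "a (m,k) * z ^ m * w ^ k - a (m,k) * w ^ m * w ^ k = a (m,k) * w ^ k * ((z - w) * hm z w m)"
        unfolding hm_diff by (simp add: algebra_simps)
      then show ?thesis using False by simp
    qed
    ultimately have "((\<lambda>(m,k). a (m,k) * w ^ k * hm z w m) has_sum ((f (z,w) - f (w,w)) / (z - w))) UNIV"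
      by simp
    then show ?thesis using G1 False has_sum_unique by fastforce
  next
    case True
    have D: "((\<lambda>(m,k). dzc a (m,k) * w ^ m * w ^ k) has_sum dz f (w,w)) UNIV"
      using dz_expansion[OF exp] w unfolding has_expansion_def by blast
    have "((\<lambda>(m,k). a (m,k) * w ^ k * hm w w m) has_sum dz f (w,w)) (range (\<lambda>(m,k). (Suc m, k)))"
    proof (subst has_sum_reindex)
      show "inj_on (\<lambda>(m,k). (Suc m, k)) UNIV" by (auto simp: inj_on_def)
      show "(((\<lambda>(m,k). a (m,k) * w ^ k * hm w w m) \<circ> (\<lambda>(m,k). (Suc m, k))) has_sum dz f (w,w)) UNIV"
        using D by (simp add: o_def case_prod_unfold dzc_def hm_eq algebra_simps)
    qed
    moreover have "x \<notin> range (\<lambda>(m,k). (Suc m, k)) \<Longrightarrow> (\<lambda>(m,k). a (m,k) * w ^ k * hm w w m) x = 0" for x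
    proof -
      assume "x \<notin> range (\<lambda>(m,k). (Suc m, k))"
      then have "fst x = 0"
        by (metis (no_types, lifting) case_prod_conv not0_implies_Suc prod.collapse rangeI)
      then show ?thesis by (simp add: case_prod_unfold hm_def)
    qed
    ultimately have "((\<lambda>(m,k). a (m,k) * w ^ k * hm w w m) has_sum dz f (w,w)) UNIV"
      using has_sum_cong_neutral[of UNIV "range (\<lambda>(m,k). (Suc m, k))"] by (smt (verit) DiffD2 UNIV_I)
    then show ?thesis using G1 True has_sum_unique by fastforce
  qed
  then show ?thesis using G2 by simp
qed

lemma Theta_expansion:
  assumes "has_expansion a f"
  shows "has_expansion (Tc L a) (Theta L f)"
  unfolding has_expansion_def
proof (intro allI impI, elim conjE)
  fix z w :: complex assume z: "norm z < 1" and w: "norm w < 1"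
  have D: "((\<lambda>(i,j). dwc a (i,j) * z ^ i * w ^ j) has_sum dw f (z,w)) UNIV"
    using dw_expansion[OF assms] z w unfolding has_expansion_def by blast
  note Q = Q_has_sum[OF assms z w]
  have "((\<lambda>x. of_real (al L) * (\<lambda>(i,j). dwc a (i,j) * z ^ i * w ^ j) x
             - of_real (be L) * (\<lambda>(i,j). qc a (i,j) * z ^ i * w ^ j) x) has_sum
        (of_real (al L) * dw f (z,w) - of_real (be L) * (if z = w then dz f (w,w) else (f (z,w) - f (w,w)) / (z - w)))) UNIV"
    by (intro has_sum_diff has_sum_cmult_right D Q)
  moreover have e1: "(\<lambda>x. of_real (al L) * (\<lambda>(i,j). dwc a (i,j) * z ^ i * w ^ j) x
             - of_real (be L) * (\<lambda>(i,j). qc a (i,j) * z ^ i * w ^ j) x) = (\<lambda>(m, n). Tc L a (m, n) * z ^ m * w ^ n)"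
    by (auto simp: fun_eq_iff Tc_def dwc_def qc_def algebra_simps)
  moreover have e2: "of_real (al L) * dw f (z,w) - of_real (be L) * (if z = w then dz f (w,w) else (f (z,w) - f (w,w)) / (z - w))
      = Theta L f (z, w)"
    by (simp add: Theta_def al_def be_def)
  ultimately show "((\<lambda>(m, n). Tc L a (m, n) * z ^ m * w ^ n) has_sum Theta L f (z, w)) UNIV"
    by simp
qed

lemma wt_pos: "\<mu> > 0 \<Longrightarrow> wt \<mu> n > 0"
  unfolding wt_def by (intro divide_pos_pos pochhammer_pos) auto

lemma ratio_summable:
  fixes y \<mu> :: real
  assumes y: "0 \<le> y" "y < 1" and mu: "\<mu> > 0"
  shows "summable (\<lambda>n. y ^ n / wt \<mu> n)"
proof -
  define f where "f n = y ^ n * (pochhammer \<mu> n / fact n)" for n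
  have fw: "y ^ n / wt \<mu> n = f n" for n unfolding f_def wt_def by simp
  have f0: "f n \<ge> 0" for n unfolding f_def using y mu by (intro mult_nonneg_nonneg divide_nonneg_nonneg pochhammer_nonneg) auto
  define c where "c = (1 + y) / 2"
  have c: "y < c" "c < 1" "0 < c" using y by (auto simp: c_def)
  obtain N :: nat where N: "\<mu> / (c - y) \<le> real N" using real_arch_simple by blast
  have step: "f (Suc n) \<le> c * f n" if n: "n \<ge> N" for n
  proof -
    have fS: "f (Suc n) = f n * (y * (\<mu> + of_nat n) / (of_nat n + 1))"
      unfolding f_def by (simp add: pochhammer_rec' field_simps)
    have "\<mu> \<le> real n * (c - y)"
    proof -
      have "\<mu> / (c - y) \<le> real n" using N n by linarith
      then show ?thesis using c by (simp add: field_simps)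
    qed
    then have h1: "\<mu> \<le> real n * c - real n * y" by (simp add: algebra_simps)
    have h2: "y * \<mu> \<le> \<mu>" using mu y by (intro mult_left_le_one_le) auto
    have h3: "y * (\<mu> + of_nat n) = y * \<mu> + real n * y" by (simp add: algebra_simps)
    have h4: "c * (of_nat n + 1) = real n * c + c" by (simp add: algebra_simps)
    have "y * (\<mu> + of_nat n) \<le> c * (of_nat n + 1)" unfolding h3 h4 using h1 h2 c by linarith
    then have "y * (\<mu> + of_nat n) / (of_nat n + 1) \<le> c" by (simp add: divide_le_eq)
    then have "f n * (y * (\<mu> + of_nat n) / (of_nat n + 1)) \<le> f n * c"
      by (rule mult_left_mono) (rule f0)
    then show ?thesis unfolding fS by (metis mult.commute)
  qed
  have "summable f"
    by (rule summable_ratio_test[of c N]) (use c step f0 in auto)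
  then show ?thesis unfolding fw .
qed

definition wsum :: "real \<Rightarrow> (nat \<times> nat \<Rightarrow> complex) \<Rightarrow> bool" where
  "wsum \<mu> a \<longleftrightarrow> (\<lambda>(m,n). (norm (a (m,n)))\<^sup>2 * wt \<mu> n) summable_on UNIV"

lemma Hsp_iff: "f \<in> Hsp \<mu> \<longleftrightarrow> has_expansion (coeffs f) f \<and> wsum \<mu> (coeffs f)"
proof
  assume "f \<in> Hsp \<mu>"
  then obtain a where a: "has_expansion a f" "(\<lambda>(m,n). (norm (a (m,n)))\<^sup>2 * wt \<mu> n) summable_on UNIV"
    unfolding Hsp_def by blast
  have "coeffs f = a" by (rule coeffs_eq[OF a(1)])
  then show "has_expansion (coeffs f) f \<and> wsum \<mu> (coeffs f)" using a by (simp add: wsum_def)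
next
  assume "has_expansion (coeffs f) f \<and> wsum \<mu> (coeffs f)"
  then show "f \<in> Hsp \<mu>" unfolding Hsp_def wsum_def by blast
qed

lemma wsum_expansion:
  assumes mu: "\<mu> > 0" and ws: "wsum \<mu> u"
  shows "has_expansion u (\<lambda>(z,w). \<Sum>\<^sub>\<infinity>(m,n). u (m,n) * z ^ m * w ^ n)"
  unfolding has_expansion_def
proof (intro allI impI, elim conjE)
  fix z w :: complex assume z: "norm z < 1" and w: "norm w < 1"
  define x where "x = (norm z)\<^sup>2"
  define y where "y = (norm w)\<^sup>2"
  have x: "0 \<le> x" "x < 1" using z by (auto simp: x_def power_less_one_iff abs_square_less_1)
  have y: "0 \<le> y" "y < 1" using w by (auto simp: y_def power_less_one_iff abs_square_less_1)
  have Ys: "summable (\<lambda>n. y ^ n / wt \<mu> n)" by (rule ratio_summable[OF y mu])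
  define Y where "Y = suminf (\<lambda>n. y ^ n / wt \<mu> n)"
  have Yh: "((\<lambda>n. y ^ n / wt \<mu> n) has_sum Y) UNIV"
    unfolding Y_def using Ys wt_pos[OF mu] y
    by (intro norm_summable_imp_has_sum) (auto simp: sums_iff abs_of_nonneg abs_of_pos[OF wt_pos[OF mu]])
  have Xs: "summable (\<lambda>m. x ^ m * Y)" using x by (intro summable_mult2 summable_geometric) auto
  have Xh: "(\<lambda>m. x ^ m * Y) summable_on UNIV"
  proof -
    have "Y \<ge> 0" using Yh by (rule has_sum_nonneg) (use wt_pos[OF mu] y in \<open>auto intro: divide_nonneg_pos\<close>)
    then show ?thesis using Xs x by (subst summable_on_UNIV_nonneg_real_iff) auto
  qed
  have P: "(\<lambda>(m,n). x ^ m * (y ^ n / wt \<mu> n)) summable_on UNIV"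
  proof -
    have "(\<lambda>(m,n). x ^ m * (y ^ n / wt \<mu> n)) summable_on (SIGMA m:UNIV. UNIV)"
    proof (rule summable_on_SigmaI[where g="\<lambda>m. x ^ m * Y"], goal_cases)
      case (1 m)
      then show ?case using has_sum_cmult_right[OF Yh, of "x ^ m"] by simp
    next
      case 2
      then show ?case by (rule Xh)
    next
      case (3 m n)
      then show ?case using wt_pos[OF mu, of n] x y by simp
    qed
    then show ?thesis by simp
  qed
  have W: "(\<lambda>(m,n). (norm (u (m,n)))\<^sup>2 * wt \<mu> n) summable_on UNIV" using ws by (simp add: wsum_def)
  have "(\<lambda>p. norm ((\<lambda>(m,n). u (m,n) * z ^ m * w ^ n) p)) summable_on UNIV"
  proof (rule summable_on_comparison_test[OF summable_on_add[OF W P]])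
    fix p :: "nat \<times> nat"
    obtain m n where p: "p = (m,n)" by force
    define A where "A = norm (u (m,n)) * sqrt (wt \<mu> n)"
    define C where "C = norm z ^ m * norm w ^ n / sqrt (wt \<mu> n)"
    have wp: "wt \<mu> n > 0" using wt_pos[OF mu] .
    have "norm (u (m,n) * z ^ m * w ^ n) = A * C"
      using wp by (simp add: A_def C_def norm_mult norm_power)
    also have "\<dots> \<le> A\<^sup>2 + C\<^sup>2"
    proof -
      have A0: "A \<ge> 0" using wp by (simp add: A_def)
      have C0: "C \<ge> 0" using wp by (simp add: C_def)
      have "0 \<le> (A - C)\<^sup>2" by simp
      then have "2 * (A * C) \<le> A\<^sup>2 + C\<^sup>2" by (simp add: power2_eq_square algebra_simps)
      moreover have "A * C \<ge> 0" using A0 C0 by simp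
      ultimately show ?thesis by linarith
    qed
    also have "A\<^sup>2 = (norm (u (m,n)))\<^sup>2 * wt \<mu> n" using wp by (simp add: A_def power_mult_distrib)
    also have "C\<^sup>2 = x ^ m * (y ^ n / wt \<mu> n)"
      using wp by (simp add: C_def x_def y_def power_mult_distrib power_divide power_mult[symmetric] mult.commute)
    finally show "norm ((\<lambda>(m,n). u (m,n) * z ^ m * w ^ n) p)
        \<le> (\<lambda>(m,n). (norm (u (m,n)))\<^sup>2 * wt \<mu> n) p + (\<lambda>(m,n). x ^ m * (y ^ n / wt \<mu> n)) p"
      by (simp add: p)
  qed simp
  then have "(\<lambda>(m,n). u (m,n) * z ^ m * w ^ n) summable_on UNIV" by (rule Infinite_Sum.abs_summable_summable)
  then show "((\<lambda>(m, n). u (m, n) * z ^ m * w ^ n) has_sum (\<lambda>(z,w). \<Sum>\<^sub>\<infinity>(m,n). u (m,n) * z ^ m * w ^ n) (z, w)) UNIV"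
    by simp
qed

lemma tt_nonneg: "L > 0 \<Longrightarrow> tt L N \<ge> 0"
  unfolding tt_def by (intro divide_nonneg_nonneg pochhammer_nonneg) auto

lemma deg_real:
  assumes "L > 1"
  shows "(\<Sum>j\<le>M. (norm (Tc L a (M - j, j)))\<^sup>2 * wt (L+1) j)
          + tt L (Suc M) * (norm (\<Sum>k\<le>Suc M. a (Suc M - k, k)))\<^sup>2
       = (\<Sum>k\<le>Suc M. (norm (a (Suc M - k, k)))\<^sup>2 * wt (L-1) k)"
proof -
  have e: "x * cnj x * complex_of_real w = complex_of_real ((norm x)\<^sup>2 * w)" for x w
    by (simp only: of_real_mult complex_norm_square)
  have e2: "complex_of_real t * S * cnj S = complex_of_real (t * (norm S)\<^sup>2)" for t S
    by (simp only: of_real_mult complex_norm_square mult.assoc)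
  have "complex_of_real ((\<Sum>j\<le>M. (norm (Tc L a (M - j, j)))\<^sup>2 * wt (L+1) j)
          + tt L (Suc M) * (norm (\<Sum>k\<le>Suc M. a (Suc M - k, k)))\<^sup>2)
       = complex_of_real (\<Sum>k\<le>Suc M. (norm (a (Suc M - k, k)))\<^sup>2 * wt (L-1) k)"
    using Tc_slice_deg[OF assms, where M=M and a=a and a'=a] unfolding e e2 by simp
  then show ?thesis by (simp only: of_real_eq_iff)
qed

lemma shift_has_sum:
  fixes g :: "nat \<Rightarrow> 'a::{comm_monoid_add, topological_space}"
  assumes "g 0 = 0"
  shows "((\<lambda>M. g (Suc M)) has_sum S) UNIV \<longleftrightarrow> (g has_sum S) UNIV"
proof -
  have "(g has_sum S) (range Suc) \<longleftrightarrow> ((g \<circ> Suc) has_sum S) UNIV"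
    by (rule has_sum_reindex) simp
  moreover have "(g has_sum S) (range Suc) \<longleftrightarrow> (g has_sum S) UNIV"
  proof (rule has_sum_cong_neutral)
    fix x assume "x \<in> UNIV - range Suc"
    then have "x = 0" by (metis DiffD2 not0_implies_Suc rangeI)
    then show "g x = 0" using assms by simp
  qed auto
  ultimately show ?thesis by (simp add: o_def)
qed

lemma shift_summable:
  fixes s :: "nat \<Rightarrow> real"
  assumes "s summable_on UNIV"
  shows "(\<lambda>M. s (Suc M)) summable_on UNIV"
proof -
  have "s summable_on range Suc" by (rule summable_on_subset_banach[OF assms]) simp
  then show ?thesis by (subst (asm) summable_on_reindex) (auto simp: o_def)
qed

lemma wsum_slices:
  assumes "wsum \<mu> a"
  shows "(\<lambda>N. \<Sum>k\<le>N. (norm (a (N - k, k)))\<^sup>2 * wt \<mu> k) summable_on UNIV"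
  using regroup_summable_D[of "\<lambda>(m,n). (norm (a (m,n)))\<^sup>2 * wt \<mu> n"] assms
  by (simp add: wsum_def)

lemma wsum_from_slices:
  assumes "\<mu> > 0" "(\<lambda>N. \<Sum>k\<le>N. (norm (a (N - k, k)))\<^sup>2 * wt \<mu> k) summable_on UNIV"
  shows "wsum \<mu> a"
  unfolding wsum_def
proof (rule regroup_summable)
  fix x :: "nat \<times> nat"
  have "0 < wt \<mu> (snd x)" by (rule wt_pos[OF assms(1)])
  then show "0 \<le> (\<lambda>(m,n). (norm (a (m,n)))\<^sup>2 * wt \<mu> n) x"
    by (simp add: case_prod_unfold)
next
  show "(\<lambda>N. \<Sum>k\<le>N. (\<lambda>(m,n). (norm (a (m,n)))\<^sup>2 * wt \<mu> n) (N - k, k)) summable_on UNIV"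
    using assms(2) by simp
qed

lemma Tc_wsum:
  assumes L: "L > 1" and ws: "wsum (L-1) a"
  shows "wsum (L+1) (Tc L a)"
proof (rule wsum_from_slices)
  show "L + 1 > 0" using L by simp
  define s where "s N = (\<Sum>k\<le>N. (norm (a (N - k, k)))\<^sup>2 * wt (L-1) k)" for N
  have s: "(\<lambda>M. s (Suc M)) summable_on UNIV"
    unfolding s_def by (rule shift_summable[OF wsum_slices[OF ws]])
  show "(\<lambda>M. \<Sum>j\<le>M. (norm (Tc L a (M - j, j)))\<^sup>2 * wt (L+1) j) summable_on UNIV"
  proof (rule summable_on_comparison_test[OF s])
    fix M
    have "tt L (Suc M) * (norm (\<Sum>k\<le>Suc M. a (Suc M - k, k)))\<^sup>2 \<ge> 0"
      using tt_nonneg[of L] L by simp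
    then show "(\<Sum>j\<le>M. (norm (Tc L a (M - j, j)))\<^sup>2 * wt (L+1) j) \<le> s (Suc M)"
      using deg_real[OF L, where M=M and a=a] unfolding s_def by linarith
    show "0 \<le> (\<Sum>j\<le>M. (norm (Tc L a (M - j, j)))\<^sup>2 * wt (L+1) j)"
      using wt_pos[of "L+1"] L by (intro sum_nonneg) (simp add: less_imp_le)
  qed
qed

lemma pre_wsum:
  assumes L: "L > 1" and ws: "wsum (L+1) c"
  shows "wsum (L-1) (pre L c)"
proof (rule wsum_from_slices)
  show "L - 1 > 0" using L by simp
  define s where "s M = (\<Sum>j\<le>M. (norm (c (M - j, j)))\<^sup>2 * wt (L+1) j)" for M
  define g where "g N = (\<Sum>k\<le>N. (norm (pre L c (N - k, k)))\<^sup>2 * wt (L-1) k)" for N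
  have gS: "g (Suc M) = s M" for M
    using deg_real[OF L, where M=M and a="pre L c"] pre_sum0[OF L, where N="Suc M" and c=c]
    unfolding g_def s_def pre_Tc[OF L] by simp
  have g0: "g 0 = 0" by (simp add: g_def pre_def)
  have "s summable_on UNIV" unfolding s_def by (rule wsum_slices[OF ws])
  then have "((\<lambda>M. g (Suc M)) has_sum infsum s UNIV) UNIV" unfolding gS by simp
  then have "(g has_sum infsum s UNIV) UNIV" using shift_has_sum[of g, OF g0] by simp
  then show "(\<lambda>N. \<Sum>k\<le>N. (norm (pre L c (N - k, k)))\<^sup>2 * wt (L-1) k) summable_on UNIV"
    unfolding g_def[symmetric] by (rule has_sum_imp_summable)
qed

lemma prod_summable:
  assumes mu: "\<mu> > 0" and a: "wsum \<mu> a" and b: "wsum \<mu> b"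
  shows "(\<lambda>(m,n). a (m,n) * cnj (b (m,n)) * of_real (wt \<mu> n)) summable_on UNIV"
proof -
  have A: "(\<lambda>(m,n). (norm (a (m,n)))\<^sup>2 * wt \<mu> n) summable_on UNIV" using a by (simp add: wsum_def)
  have B: "(\<lambda>(m,n). (norm (b (m,n)))\<^sup>2 * wt \<mu> n) summable_on UNIV" using b by (simp add: wsum_def)
  have "(\<lambda>p. norm ((\<lambda>(m,n). a (m,n) * cnj (b (m,n)) * of_real (wt \<mu> n)) p)) summable_on UNIV"
  proof (rule summable_on_comparison_test[OF summable_on_add[OF A B]])
    fix p :: "nat \<times> nat"
    obtain m n where p: "p = (m,n)" by force
    have wp: "wt \<mu> n > 0" by (rule wt_pos[OF mu])
    define x where "x = norm (a (m,n))"
    define y where "y = norm (b (m,n))"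
    have x0: "x \<ge> 0" "y \<ge> 0" by (auto simp: x_def y_def)
    have "x * y \<le> x\<^sup>2 + y\<^sup>2"
    proof -
      have "0 \<le> (x - y)\<^sup>2" by simp
      then have "2 * (x * y) \<le> x\<^sup>2 + y\<^sup>2" by (simp add: power2_eq_square algebra_simps)
      moreover have "x * y \<ge> 0" using x0 by simp
      ultimately show ?thesis by linarith
    qed
    then have "x * y * wt \<mu> n \<le> (x\<^sup>2 + y\<^sup>2) * wt \<mu> n" using wp by (intro mult_right_mono) auto
    then show "norm ((\<lambda>(m,n). a (m,n) * cnj (b (m,n)) * of_real (wt \<mu> n)) p)
       \<le> (\<lambda>(m,n). (norm (a (m,n)))\<^sup>2 * wt \<mu> n) p + (\<lambda>(m,n). (norm (b (m,n)))\<^sup>2 * wt \<mu> n) p"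
      using wp by (simp add: p x_def y_def norm_mult algebra_simps abs_of_pos)
  qed simp
  then show ?thesis by (rule Infinite_Sum.abs_summable_summable)
qed

lemma inner_Tc:
  assumes L: "L > 1" and a: "wsum (L-1) a" and b: "wsum (L-1) b"
    and b0: "\<And>N. (\<Sum>k\<le>N. b (N - k, k)) = 0"
  shows "(\<Sum>\<^sub>\<infinity>(i,j). Tc L a (i,j) * cnj (Tc L b (i,j)) * of_real (wt (L+1) j))
       = (\<Sum>\<^sub>\<infinity>(m,n). a (m,n) * cnj (b (m,n)) * of_real (wt (L-1) n))"
proof -
  define F where "F = (\<lambda>(i,j). Tc L a (i,j) * cnj (Tc L b (i,j)) * of_real (wt (L+1) j))"
  define G where "G = (\<lambda>(m,n). a (m,n) * cnj (b (m,n)) * of_real (wt (L-1) n))"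
  have Fs: "F summable_on UNIV" unfolding F_def
    by (rule prod_summable) (use L Tc_wsum[OF L a] Tc_wsum[OF L b] in auto)
  have Gs: "G summable_on UNIV" unfolding G_def
    by (rule prod_summable) (use L a b in auto)
  have RF: "((\<lambda>M. \<Sum>j\<le>M. F (M - j, j)) has_sum infsum F UNIV) UNIV"
    by (rule regroup) (use Fs in simp)
  have RG: "((\<lambda>N. \<Sum>k\<le>N. G (N - k, k)) has_sum infsum G UNIV) UNIV"
    by (rule regroup) (use Gs in simp)
  have eq: "(\<Sum>j\<le>M. F (M - j, j)) = (\<Sum>k\<le>Suc M. G (Suc M - k, k))" for M
  proof -
    have z: "(\<Sum>k\<le>Suc M. b (Suc M - k, k)) = 0" by (rule b0)
    show ?thesis
      using Tc_slice_deg[OF L, where M=M and a=a and a'=b] unfolding z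
      by (simp del: sum.atMost_Suc add: F_def G_def)
  qed
  have g0: "(\<Sum>k\<le>0. G (0 - k, k)) = 0" using b0[of 0] by (simp add: G_def)
  have "((\<lambda>M. \<Sum>k\<le>Suc M. G (Suc M - k, k)) has_sum infsum F UNIV) UNIV" using RF unfolding eq .
  then have "((\<lambda>N. \<Sum>k\<le>N. G (N - k, k)) has_sum infsum F UNIV) UNIV"
    using shift_has_sum[of "\<lambda>N. \<Sum>k\<le>N. G (N - k, k)", OF g0] by simp
  then have "infsum F UNIV = infsum G UNIV" using RG has_sum_unique by blast
  then show ?thesis by (simp add: F_def G_def)
qed

lemma Theta_Hsp:
  assumes L: "L > 1" and f: "f \<in> Hsp (L - 1)"
  shows "Theta L f \<in> Hsp (L + 1)" "coeffs (Theta L f) = Tc L (coeffs f)"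
proof -
  have e: "has_expansion (coeffs f) f" and w: "wsum (L-1) (coeffs f)" using f Hsp_iff by auto
  have e2: "has_expansion (Tc L (coeffs f)) (Theta L f)" by (rule Theta_expansion[OF e])
  show c: "coeffs (Theta L f) = Tc L (coeffs f)" by (rule coeffs_eq[OF e2])
  show "Theta L f \<in> Hsp (L + 1)" unfolding Hsp_iff c using e2 Tc_wsum[OF L w] by simp
qed

definition Ufun :: "(nat \<times> nat \<Rightarrow> complex) \<Rightarrow> complex \<times> complex \<Rightarrow> complex" where
  "Ufun u = (\<lambda>(z,w). \<Sum>\<^sub>\<infinity>(m,n). u (m,n) * z ^ m * w ^ n)"

lemma U_facts:
  assumes L: "L > 1" and g: "g \<in> Hsp (L + 1)"
  defines "u \<equiv> pre L (coeffs g)"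
  shows "Ufun u \<in> Hsp (L - 1)" "coeffs (Ufun u) = u" "has_expansion u (Ufun u)"
        "coeffs (Theta L (Ufun u)) = coeffs g" "\<And>N. (\<Sum>k\<le>N. u (N - k, k)) = 0"
proof -
  have wg: "wsum (L+1) (coeffs g)" using g Hsp_iff by auto
  have wu: "wsum (L-1) u" unfolding u_def by (rule pre_wsum[OF L wg])
  show eu: "has_expansion u (Ufun u)" unfolding Ufun_def by (rule wsum_expansion) (use L wu in auto)
  show cu: "coeffs (Ufun u) = u" by (rule coeffs_eq[OF eu])
  show UH: "Ufun u \<in> Hsp (L - 1)" unfolding Hsp_iff cu using eu wu by simp
  show "coeffs (Theta L (Ufun u)) = coeffs g"
    using Theta_Hsp(2)[OF L UH] cu pre_Tc[OF L] by (simp add: u_def)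
  show "\<And>N. (\<Sum>k\<le>N. u (N - k, k)) = 0" unfolding u_def by (rule pre_sum0[OF L])
qed

lemma inner_Theta:
  assumes L: "L > 1" and f: "f \<in> Hsp (L - 1)" and v: "v \<in> Hsp (L - 1)"
    and v0: "\<And>N. (\<Sum>k\<le>N. coeffs v (N - k, k)) = 0"
  shows "inner_H (L + 1) (Theta L f) (Theta L v) = inner_H (L - 1) f v"
  unfolding inner_H_def Theta_Hsp(2)[OF L f] Theta_Hsp(2)[OF L v]
  by (rule inner_Tc[OF L _ _ v0]) (use f v Hsp_iff in auto)

lemma slices_zero:
  assumes "v \<in> Hsp \<mu>" "vanishes_to_order n v" "n \<ge> 1"
  shows "(\<Sum>k\<le>N. coeffs v (N - k, k)) = 0"
proof -
  have "Van n (coeffs v)" using assms vanishes_iff_Van Hsp_iff by blast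
  then have "Mom n (coeffs v)" by (rule Van_imp_Mom)
  then have "(\<Sum>k\<le>N. coeffs v (N - k, k) * of_nat (k choose 0)) = 0"
    using assms(3) unfolding Mom_def by (metis less_le_trans zero_less_one)
  then show ?thesis by simp
qed

theorem lemma6p4:
  fixes lam :: real and n :: nat
  assumes "lam > 1" and "n \<ge> 1"
  shows "(\<forall>f \<in> Vsp n (lam - 1). Theta lam f \<in> Vsp (n - 1) (lam + 1)) \<and>
         (\<forall>f \<in> Vperp n (lam - 1). Theta lam f \<in> Vperp (n - 1) (lam + 1))"
proof (intro conjI ballI)
  note L = assms(1)
  fix f assume fV: "f \<in> Vsp n (lam - 1)"
  then have fH: "f \<in> Hsp (lam - 1)" and fo: "\<And>g. g \<in> Hsp (lam - 1) \<Longrightarrow> vanishes_to_order n g \<Longrightarrow> inner_H (lam - 1) f g = 0"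
    unfolding Vsp_def by auto
  show "Theta lam f \<in> Vsp (n - 1) (lam + 1)"
    unfolding Vsp_def
  proof (intro CollectI conjI ballI impI)
    show "Theta lam f \<in> Hsp (lam + 1)" by (rule Theta_Hsp(1)[OF L fH])
    fix g assume gH: "g \<in> Hsp (lam + 1)" and gv: "vanishes_to_order (n - 1) g"
    define u where "u = pre lam (coeffs g)"
    note UF = U_facts[OF L gH, folded u_def]
    have "Van (n - 1) (coeffs g)" using gv gH vanishes_iff_Van Hsp_iff by blast
    then have "Mom (n - 1) (coeffs g)" by (rule Van_imp_Mom)
    then have "Mom n u" unfolding u_def using Mom_pre[OF L _ assms(2)] by blast
    then have "Van n u" by (rule Mom_imp_Van)
    then have Uv: "vanishes_to_order n (Ufun u)" using vanishes_iff_Van[OF UF(3)] by blast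
    have "inner_H (lam + 1) (Theta lam f) g = inner_H (lam + 1) (Theta lam f) (Theta lam (Ufun u))"
      unfolding inner_H_def UF(4) ..
    also have "\<dots> = inner_H (lam - 1) f (Ufun u)"
      by (rule inner_Theta[OF L fH UF(1)]) (simp add: UF(2) UF(5))
    also have "\<dots> = 0" by (rule fo[OF UF(1) Uv])
    finally show "inner_H (lam + 1) (Theta lam f) g = 0" .
  qed
next
  note L = assms(1)
  fix h assume hV: "h \<in> Vperp n (lam - 1)"
  then have hH: "h \<in> Hsp (lam - 1)" and ho: "\<And>v. v \<in> Vsp n (lam - 1) \<Longrightarrow> inner_H (lam - 1) h v = 0"
    unfolding Vperp_def by auto
  show "Theta lam h \<in> Vperp (n - 1) (lam + 1)"
    unfolding Vperp_def
  proof (intro CollectI conjI ballI)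
    show "Theta lam h \<in> Hsp (lam + 1)" by (rule Theta_Hsp(1)[OF L hH])
    fix g assume gV: "g \<in> Vsp (n - 1) (lam + 1)"
    then have gH: "g \<in> Hsp (lam + 1)"
      and go: "\<And>w. w \<in> Hsp (lam + 1) \<Longrightarrow> vanishes_to_order (n - 1) w \<Longrightarrow> inner_H (lam + 1) g w = 0"
      unfolding Vsp_def by auto
    define u where "u = pre lam (coeffs g)"
    note UF = U_facts[OF L gH, folded u_def]
    have UV: "Ufun u \<in> Vsp n (lam - 1)"
      unfolding Vsp_def
    proof (intro CollectI conjI ballI impI)
      show "Ufun u \<in> Hsp (lam - 1)" by (rule UF(1))
      fix w assume wH: "w \<in> Hsp (lam - 1)" and wv: "vanishes_to_order n w"
      have w0: "\<And>N. (\<Sum>k\<le>N. coeffs w (N - k, k)) = 0" by (rule slices_zero[OF wH wv assms(2)])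
      have TwH: "Theta lam w \<in> Hsp (lam + 1)" by (rule Theta_Hsp(1)[OF L wH])
      have "Van n (coeffs w)" using wv wH vanishes_iff_Van Hsp_iff by blast
      then have "Mom n (coeffs w)" by (rule Van_imp_Mom)
      then have "Mom (n - 1) (Tc lam (coeffs w))" by (rule Mom_Tc[OF _ assms(2)])
      then have "Van (n - 1) (coeffs (Theta lam w))" unfolding Theta_Hsp(2)[OF L wH] by (rule Mom_imp_Van)
      then have Twv: "vanishes_to_order (n - 1) (Theta lam w)"
        using vanishes_iff_Van TwH Hsp_iff by blast
      have "inner_H (lam - 1) (Ufun u) w = inner_H (lam + 1) (Theta lam (Ufun u)) (Theta lam w)"
        by (rule inner_Theta[OF L UF(1) wH w0, symmetric])
      also have "\<dots> = inner_H (lam + 1) g (Theta lam w)"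
        unfolding inner_H_def UF(4) ..
      also have "\<dots> = 0" by (rule go[OF TwH Twv])
      finally show "inner_H (lam - 1) (Ufun u) w = 0" .
    qed
    have "inner_H (lam + 1) (Theta lam h) g = inner_H (lam + 1) (Theta lam h) (Theta lam (Ufun u))"
      unfolding inner_H_def UF(4) ..
    also have "\<dots> = inner_H (lam - 1) h (Ufun u)"
      by (rule inner_Theta[OF L hH UF(1)]) (simp add: UF(2) UF(5))
    also have "\<dots> = 0" by (rule ho[OF UV])
    finally show "inner_H (lam + 1) (Theta lam h) g = 0" .
  qed
qed

end
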